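(* Let $D:=\{(j,w): w\in W,\ 1\le j\le N_w\}$, equipped with the measure $\mu:=\sum_j \delta_j\otimes\mathcal L^1\llcorner D(j)$, where $D(j)=\{w:(j,w)\in D\}$. Define $\mathtt s:D\to J$ by $$\mathtt s(j,w):=|D u_0|\big((-\infty,\gamma_{j,w}(0))\big)+\big|w-u_0(\gamma_{j,w}(0)-)\big|.$$ Then $\mathtt s$ is injective outside a $\mu$-negligible set (namely outside the at most countably many $w$ with $\mathcal L^1(\{u_0=w\})>0$) and $\mathtt s_\sharp\mu=\mathcal L^1\llcorner J$; hence $\mathtt s$ is a measure preserving bijection between $(D,\mu)$ and $(J,\mathcal L^1)$ up to negligible sets.
   Context: Standing setting: $f\in C^2(\mathbb R)$; $u_0\in L^1(\mathbb R)$ of bounded total variation $\mathrm{TV}(u_0)$, compactly supported, values in $[0,M]$; $u$ the entropy solution of $u_t+f(u)_x=0$, $u(0)=u_0$, right-continuous in $x$; $J:=(0,\mathrm{TV}(u_0)]$; $u_0(y-)$ is the left limit. $W\subset[0,M]$ is a set of full $\mathcal L^1$-measure such that for $w\in W$ the level set $\{u>w\}$ is bounded by finitely many ordered Lipschitz curves $\gamma_{j,w}$, $1\le j\le N_w$, whose initial points $\{\gamma_{j,w}(0)\}_j$ are exactly the points of $\partial\{u_0>w\}$ (counted so that $N_w=\mathcal H^0(\partial\{u_0>w\})$), with $u_0$ crossing the value $w$ upward at $\gamma_{j,w}(0)$ for $j$ odd and downward for $j$ even. *)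

theory Defs
  imports "HOL-Analysis.Analysis"
begin

text \<open>For a right-continuous BV
function on the line, pvar u {..<a} equals the variation measure of the
distributional derivative on the open half-line (-inf,a), and pvar u UNIV
equals the total variation.\<close>
definition pvar :: "(real \<Rightarrow> real) \<Rightarrow> real set \<Rightarrow> ennreal" where
  "pvar u S = (SUP xs \<in> {xs. sorted_wrt (<) xs \<and> set xs \<subseteq> S}.
      ennreal (\<Sum>i < length xs - 1. \<bar>u (xs ! Suc i) - u (xs ! i)\<bar>))"

definition TV :: "(real \<Rightarrow> real) \<Rightarrow> real" where
  "TV u = enn2real (pvar u UNIV)"

definition left_lim :: "(real \<Rightarrow> real) \<Rightarrow> real \<Rightarrow> real" where
  "left_lim u x = Lim (at_left x) u"

definition crosses_up :: "(real \<Rightarrow> real) \<Rightarrow> real \<Rightarrow> real \<Rightarrow> bool" where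
  "crosses_up u w x \<longleftrightarrow> (\<exists>\<delta>>0. (\<forall>y\<in>{x-\<delta><..<x}. u y \<le> w) \<and> (\<forall>y\<in>{x<..<x+\<delta>}. u y > w))"

definition crosses_down :: "(real \<Rightarrow> real) \<Rightarrow> real \<Rightarrow> real \<Rightarrow> bool" where
  "crosses_down u w x \<longleftrightarrow> (\<exists>\<delta>>0. (\<forall>y\<in>{x-\<delta><..<x}. u y > w) \<and> (\<forall>y\<in>{x<..<x+\<delta>}. u y \<le> w))"

definition sfun :: "(real \<Rightarrow> real) \<Rightarrow> (nat \<Rightarrow> real \<Rightarrow> real \<Rightarrow> real) \<Rightarrow> nat \<Rightarrow> real \<Rightarrow> real" where
  "sfun u0 \<gamma> j w = enn2real (pvar u0 {..<\<gamma> j w 0}) + \<bar>w - left_lim u0 (\<gamma> j w 0)\<bar>"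

definition Dset :: "real set \<Rightarrow> (real \<Rightarrow> nat) \<Rightarrow> (nat \<times> real) set" where
  "Dset W N = {(j, w). w \<in> W \<and> 1 \<le> j \<and> j \<le> N w}"

definition muD :: "real set \<Rightarrow> (real \<Rightarrow> nat) \<Rightarrow> (nat \<times> real) set \<Rightarrow> ennreal" where
  "muD W N A = (\<Sum>j. emeasure lebesgue {w. (j, w) \<in> Dset W N \<and> (j, w) \<in> A})"

end

theory Submission
  imports Defs
begin


definition lv :: "(real \<Rightarrow> real) \<Rightarrow> real list \<Rightarrow> real" where
  "lv u xs = (\<Sum>i < length xs - 1. \<bar>u (xs ! Suc i) - u (xs ! i)\<bar>)"

lemma pvar_alt: "pvar u S = (SUP xs \<in> {xs. sorted_wrt (<) xs \<and> set xs \<subseteq> S}. ennreal (lv u xs))"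
  by (simp add: pvar_def lv_def)

lemma lv_nonneg: "0 \<le> lv u xs"
  unfolding lv_def by (auto intro!: sum_nonneg)

lemma lv_snoc: assumes "xs \<noteq> []" shows "lv u (xs @ [y]) = lv u xs + \<bar>u y - u (last xs)\<bar>"
proof -
  obtain n where n: "length xs = Suc n" using assms by (cases xs) auto
  have "lv u (xs @ [y]) = (\<Sum>i < Suc n. \<bar>u ((xs@[y]) ! Suc i) - u ((xs@[y]) ! i)\<bar>)"
    by (simp add: lv_def n)
  also have "\<dots> = (\<Sum>i < n. \<bar>u ((xs@[y]) ! Suc i) - u ((xs@[y]) ! i)\<bar>) + \<bar>u y - u (last xs)\<bar>"
    using n assms by (simp add: nth_append last_conv_nth)
  also have "(\<Sum>i < n. \<bar>u ((xs@[y]) ! Suc i) - u ((xs@[y]) ! i)\<bar>) = lv u xs"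
    unfolding lv_def n by (intro sum.cong) (auto simp: nth_append n)
  finally show ?thesis .
qed

lemma lv_single[simp]: "lv u [x] = 0" by (simp add: lv_def)
lemma lv_Nil[simp]: "lv u [] = 0" by (simp add: lv_def)

lemma sorted_last_max: "sorted_wrt (<) xs \<Longrightarrow> z \<in> set xs \<Longrightarrow> z \<le> (last xs :: real)"
proof (induction xs rule: rev_induct)
  case (snoc a xs) then show ?case by (auto simp: sorted_wrt_append)
qed simp

lemma lv_le_pvar: "sorted_wrt (<) xs \<Longrightarrow> set xs \<subseteq> S \<Longrightarrow> ennreal (lv u xs) \<le> pvar u S"
  unfolding pvar_alt by (rule SUP_upper) auto

lemma pvar_mono: "S \<subseteq> T \<Longrightarrow> pvar u S \<le> pvar u T"
  unfolding pvar_alt by (rule SUP_subset_mono) auto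

lemma extend_list:
  assumes "sorted_wrt (<) xs" "set xs \<subseteq> {..x}"
  shows "\<exists>ys. sorted_wrt (<) ys \<and> set ys \<subseteq> {..x} \<and> ys \<noteq> [] \<and> last ys = x \<and> lv u xs \<le> lv u ys"
proof (cases "x \<in> set xs")
  case True
  have ne: "xs \<noteq> []" using True by auto
  have "last xs \<le> x" using assms(2) last_in_set[OF ne] by auto
  then have "last xs = x" using sorted_last_max[OF assms(1) True] by linarith
  then show ?thesis using assms True by (intro exI[of _ xs]) auto
next
  case False
  then have lt: "\<forall>z\<in>set xs. z < x" using assms(2) by (metis atMost_iff order_le_less subsetD)
  show ?thesis
  proof (cases "xs = []")
    case True then show ?thesis by (intro exI[of _ "[x]"]) (auto simp: lv_nonneg)
  next
    case ne: False
    show ?thesis using assms lt ne by (intro exI[of _ "xs @ [x]"]) (auto simp: lv_snoc sorted_wrt_append)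
  qed
qed

lemma pvar_Pinc:
  assumes "x < y" shows "pvar u {..x} + ennreal \<bar>u y - u x\<bar> \<le> pvar u {..y}"
proof -
  have "pvar u {..x} + ennreal \<bar>u y - u x\<bar> = (SUP xs \<in> {xs. sorted_wrt (<) xs \<and> set xs \<subseteq> {..x}}. ennreal (lv u xs) + ennreal \<bar>u y - u x\<bar>)"
    unfolding pvar_alt by (rule ennreal_SUP_add_left[symmetric]) (auto intro!: exI[of _ "[]"])
  also have "\<dots> \<le> pvar u {..y}"
  proof (rule SUP_least)
    fix xs assume xs: "xs \<in> {xs. sorted_wrt (<) xs \<and> set xs \<subseteq> {..x}}"
    then obtain ys where ys: "sorted_wrt (<) ys" "set ys \<subseteq> {..x}" "ys \<noteq> []" "last ys = x" "lv u xs \<le> lv u ys"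
      using extend_list[of xs x u] by auto
    have s: "sorted_wrt (<) (ys @ [y])" using ys assms by (auto simp: sorted_wrt_append)
    have "ennreal (lv u xs) + ennreal \<bar>u y - u x\<bar> = ennreal (lv u xs + \<bar>u y - u x\<bar>)"
      by (simp add: lv_nonneg ennreal_plus)
    also have "\<dots> \<le> ennreal (lv u (ys @ [y]))" using ys by (simp add: lv_snoc ennreal_leI)
    also have "\<dots> \<le> pvar u {..y}" by (rule lv_le_pvar[OF s]) (use ys assms in auto)
    finally show "ennreal (lv u xs) + ennreal \<bar>u y - u x\<bar> \<le> pvar u {..y}" .
  qed
  finally show ?thesis .
qed

lemma pvar_lessThan_SUP: "pvar u {..<x} = (SUP z\<in>{..<x}. pvar u {..z})"
proof (rule antisym)
  show "(SUP z\<in>{..<x}. pvar u {..z}) \<le> pvar u {..<x}"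
    by (rule SUP_least) (auto intro!: pvar_mono)
  show "pvar u {..<x} \<le> (SUP z\<in>{..<x}. pvar u {..z})"
    unfolding pvar_alt[of u "{..<x}"]
  proof (rule SUP_least)
    fix xs assume xs: "xs \<in> {xs. sorted_wrt (<) xs \<and> set xs \<subseteq> {..<x}}"
    show "ennreal (lv u xs) \<le> (SUP z\<in>{..<x}. pvar u {..z})"
    proof (cases "xs = []")
      case True then show ?thesis by (simp add: lv_def)
    next
      case False
      then have "last xs < x" using xs last_in_set by blast
      moreover have "ennreal (lv u xs) \<le> pvar u {..last xs}"
        using xs sorted_last_max by (intro lv_le_pvar) auto
      ultimately show ?thesis by (meson SUP_upper2 lessThan_iff)
    qed
  qed
qed

lemma pvar_UNIV_SUP: "pvar u UNIV = (SUP x. pvar u {..<x})"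
proof (rule antisym)
  show "(SUP x. pvar u {..<x}) \<le> pvar u UNIV" by (rule SUP_least) (auto intro!: pvar_mono)
  show "pvar u UNIV \<le> (SUP x. pvar u {..<x})"
    unfolding pvar_alt[of u UNIV]
  proof (rule SUP_least)
    fix xs :: "real list" assume xs: "xs \<in> {xs. sorted_wrt (<) xs \<and> set xs \<subseteq> UNIV}"
    show "ennreal (lv u xs) \<le> (SUP x. pvar u {..<x})"
    proof (cases "xs = []")
      case True then show ?thesis by (simp add: lv_def)
    next
      case False
      have "ennreal (lv u xs) \<le> pvar u {..<last xs + 1}"
        using xs sorted_last_max by (intro lv_le_pvar) (auto, fastforce)
      then show ?thesis by (meson SUP_upper2 UNIV_I)
    qed
  qed
qed


locale setting =
  fixes u :: "real \<Rightarrow> real" and M :: real and W :: "real set"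
    and N :: "real \<Rightarrow> nat" and \<gamma> :: "nat \<Rightarrow> real \<Rightarrow> real \<Rightarrow> real" and R :: real
  assumes rcont: "\<forall>x. continuous (at_right x) u"
    and bv: "pvar u UNIV < \<infinity>"
    and Rpos: "0 \<le> R"
    and Rsupp: "\<And>x. R < \<bar>x\<bar> \<Longrightarrow> u x = 0"
    and range: "\<forall>x. 0 \<le> u x \<and> u x \<le> M"
    and W_sub: "W \<subseteq> {0..M}"
    and W_full: "{0..M} - W \<in> null_sets lebesgue"
    and fin: "\<forall>w\<in>W. finite (frontier {x. u x > w})"
    and N_card: "\<forall>w\<in>W. N w = card (frontier {x. u x > w})"
    and pts: "\<forall>w\<in>W. {\<gamma> j w 0 | j. 1 \<le> j \<and> j \<le> N w} = frontier {x. u x > w}"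
    and ordered: "\<forall>w\<in>W. \<forall>j k. 1 \<le> j \<and> j < k \<and> k \<le> N w \<longrightarrow> \<gamma> j w 0 < \<gamma> k w 0"
    and up: "\<forall>w\<in>W. \<forall>j. 1 \<le> j \<and> j \<le> N w \<and> odd j \<longrightarrow> crosses_up u w (\<gamma> j w 0)"
    and down: "\<forall>w\<in>W. \<forall>j. 1 \<le> j \<and> j \<le> N w \<and> even j \<longrightarrow> crosses_down u w (\<gamma> j w 0)"
begin

definition P where "P x = enn2real (pvar u {..x})"
definition V where "V x = enn2real (pvar u {..<x})"
definition ul where "ul x = left_lim u x"

lemma pvar_fin: "pvar u S < \<infinity>"
  using pvar_mono[of S UNIV u] bv by (meson le_less_trans top_greatest)

lemma pvar_eq: "pvar u S = ennreal (enn2real (pvar u S))"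
  using pvar_fin[of S] by (simp add: less_top)

lemma P_eq: "pvar u {..x} = ennreal (P x)" unfolding P_def by (rule pvar_eq)
lemma V_eq: "pvar u {..<x} = ennreal (V x)" unfolding V_def by (rule pvar_eq)
lemma P_nonneg: "0 \<le> P x" by (simp add: P_def)
lemma V_nonneg: "0 \<le> V x" by (simp add: V_def)

lemma P_inc: "x < y \<Longrightarrow> P x + \<bar>u y - u x\<bar> \<le> P y"
  using pvar_Pinc[of x y u] by (simp add: P_eq ennreal_plus[symmetric] P_nonneg del: ennreal_plus)

lemma P_mono: "x \<le> y \<Longrightarrow> P x \<le> P y"
  using P_inc[of x y] by (cases "x = y") auto

lemma P_le_V: assumes "x < y" shows "P x \<le> V y"
proof -
  have "{..x} \<subseteq> {..<y}" using assms by auto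
  from pvar_mono[OF this, of u] show ?thesis by (simp add: P_eq V_eq V_nonneg)
qed

lemma V_le_P: "V x \<le> P x"
proof -
  have "{..<x} \<subseteq> {..x}" by auto
  from pvar_mono[OF this, of u] show ?thesis by (simp add: P_eq V_eq P_nonneg)
qed

lemma V_mono: "x \<le> y \<Longrightarrow> V x \<le> V y"
  using pvar_mono[of "{..<x}" "{..<y}" u] by (simp add: V_eq V_nonneg)


lemma mono_V: "mono V" by (rule monoI) (rule V_mono)

lemma P_tendsto: "(P \<longlongrightarrow> V x) (at_left x)"
proof (rule order_tendstoI)
  fix a assume a: "a < V x"
  show "eventually (\<lambda>y. a < P y) (at_left x)"
  proof (cases "a < 0")
    case True then show ?thesis using P_nonneg by (simp add: less_le_trans)
  next
    case False
    then have "ennreal a < pvar u {..<x}" using V_eq a by (simp add: ennreal_less_iff)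
    then obtain z where z: "z < x" "ennreal a < pvar u {..z}"
      unfolding pvar_lessThan_SUP[of u x] less_SUP_iff by auto
    then have az: "a < P z" using P_eq False by (simp add: ennreal_less_iff)
    show ?thesis
      unfolding eventually_at_left[OF z(1)]
    proof (intro exI[of _ z] conjI allI impI)
      fix y assume "z < y" "y < x"
      then show "a < P y" using P_mono[of z y] az by linarith
    qed (use z in auto)
  qed
next
  fix a assume a: "V x < a"
  have "eventually (\<lambda>y. y < x) (at_left x)" by (simp add: eventually_at_filter)
  then show "eventually (\<lambda>y. P y < a) (at_left x)"
  proof eventually_elim
    case (elim y) then show ?case using P_le_V[of y x] a by linarith
  qed
qed

lemma mono_Pu: "mono (\<lambda>x. P x + u x)"
proof (rule monoI)
  fix x y :: real assume "x \<le> y" then show "P x + u x \<le> P y + u y"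
    using P_inc[of x y] by (cases "x = y") auto
qed

lemma mono_Pmu: "mono (\<lambda>x. P x - u x)"
proof (rule monoI)
  fix x y :: real assume "x \<le> y" then show "P x - u x \<le> P y - u y"
    using P_inc[of x y] by (cases "x = y") auto
qed

lemma mono_P: "mono P" by (auto intro: monoI P_mono)

lemma u_borel: "u \<in> borel_measurable borel"
proof -
  have "(\<lambda>x. (P x + u x) - P x) \<in> borel_measurable borel"
    by (rule borel_measurable_diff[OF borel_measurable_mono[OF mono_Pu] borel_measurable_mono[OF mono_P]])
  then show ?thesis by simp
qed

lemma mono_tendsto_left:
  fixes f :: "real \<Rightarrow> real" assumes "mono f"
  shows "\<exists>l. (f \<longlongrightarrow> l) (at_left x)"
proof -
  have "(f \<longlongrightarrow> Sup (f ` ({..<x} \<inter> UNIV))) (at x within ({..<x} \<inter> UNIV))"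
  proof (rule Lim_left_bound[where K = "f x"])
    fix a b :: real assume "a \<le> b" then show "f a \<le> f b" using assms by (simp add: mono_def)
  next
    fix b :: real assume "b < x" then show "f b \<le> f x" using assms by (simp add: mono_def)
  qed
  then show ?thesis by auto
qed

lemma u_tendsto_left: "(u \<longlongrightarrow> ul x) (at_left x)"
proof -
  obtain l where l: "((\<lambda>x. P x + u x) \<longlongrightarrow> l) (at_left x)" using mono_tendsto_left[OF mono_Pu] by blast
  have "((\<lambda>y. (P y + u y) - P y) \<longlongrightarrow> l - V x) (at_left x)"
    by (intro tendsto_diff l P_tendsto)
  then have *: "(u \<longlongrightarrow> l - V x) (at_left x)" by simp
  then have "ul x = l - V x" unfolding ul_def left_lim_def
    by (intro tendsto_Lim) (auto simp: trivial_limit_at_left_real)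
  then show ?thesis using * by simp
qed

lemma P_jump: "V x + \<bar>u x - ul x\<bar> \<le> P x"
proof -
  have "((\<lambda>z. P z + \<bar>u x - u z\<bar>) \<longlongrightarrow> V x + \<bar>u x - ul x\<bar>) (at_left x)"
    by (intro tendsto_add P_tendsto tendsto_rabs tendsto_diff tendsto_const u_tendsto_left)
  moreover have "eventually (\<lambda>z. P z + \<bar>u x - u z\<bar> \<le> P x) (at_left x)"
  proof -
    have "eventually (\<lambda>y. y < x) (at_left x)" by (simp add: eventually_at_filter)
    then show ?thesis
    proof eventually_elim
      case (elim z) then show ?case using P_inc[of z x] by linarith
    qed
  qed
  ultimately show ?thesis
    by (intro tendsto_le[OF trivial_limit_at_left_real tendsto_const]) auto
qed

lemma u_right: "(u \<longlongrightarrow> u x) (at_right x)"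
  using rcont continuous_within[of x "{x<..}" u] by simp

end


lemma prefix_card:
  fixes A :: "nat set"
  assumes "A \<subseteq> {1..n}" "\<And>i j. j \<in> A \<Longrightarrow> 1 \<le> i \<Longrightarrow> i \<le> j \<Longrightarrow> i \<in> A"
  shows "A = {1..card A}"
proof (cases "A = {}")
  case True then show ?thesis by simp
next
  case False
  have fA: "finite A" using assms(1) finite_subset by blast
  define a where "a = Max A"
  have aA: "a \<in> A" using False fA by (simp add: a_def)
  have "A = {1..a}"
  proof
    show "A \<subseteq> {1..a}" using assms(1) fA a_def by auto
    show "{1..a} \<subseteq> A" using assms(2)[OF aA] by auto
  qed
  then show ?thesis by simp
qed

context setting begin

definition S where "S w = {x. u x > w}"
definition g where "g j w = \<gamma> j w 0"
definition k where "k w y = card {j \<in> {1..N w}. g j w < y}"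
definition k' where "k' w y = card {j \<in> {1..N w}. g j w \<le> y}"

lemma W_nonneg: "w \<in> W \<Longrightarrow> 0 \<le> w" using W_sub by auto
lemma W_leM: "w \<in> W \<Longrightarrow> w \<le> M" using W_sub by auto

lemma g_strict: "w \<in> W \<Longrightarrow> 1 \<le> i \<Longrightarrow> i < j \<Longrightarrow> j \<le> N w \<Longrightarrow> g i w < g j w"
  using ordered by (auto simp: g_def)

lemma g_less_iff: assumes w: "w \<in> W" and i: "1 \<le> i" "i \<le> N w" and j: "1 \<le> j" "j \<le> N w"
  shows "g i w < g j w \<longleftrightarrow> i < j"
proof (cases i j rule: linorder_cases)
  case less then show ?thesis using g_strict[OF w i(1) less j(2)] by simp
next
  case equal then show ?thesis by simp
next
  case greater then show ?thesis using g_strict[OF w j(1) greater i(2)] by simp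
qed

lemma g_eq_iff: assumes w: "w \<in> W" and i: "1 \<le> i" "i \<le> N w" and j: "1 \<le> j" "j \<le> N w"
  shows "g i w = g j w \<longleftrightarrow> i = j"
proof (cases i j rule: linorder_cases)
  case less then show ?thesis using g_strict[OF w i(1) less j(2)] by simp
next
  case equal then show ?thesis by simp
next
  case greater then show ?thesis using g_strict[OF w j(1) greater i(2)] by simp
qed

lemma g_frontier: "w \<in> W \<Longrightarrow> 1 \<le> j \<Longrightarrow> j \<le> N w \<Longrightarrow> g j w \<in> frontier (S w)"
  using pts unfolding S_def g_def by blast

lemma frontier_g: assumes w: "w \<in> W" and y: "y \<in> frontier (S w)" shows "\<exists>j. 1 \<le> j \<and> j \<le> N w \<and> g j w = y"
proof -
  have "y \<in> {\<gamma> j w 0 | j. 1 \<le> j \<and> j \<le> N w}" using pts w y by (simp add: S_def)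
  then show ?thesis by (auto simp: g_def)
qed

lemma u_out: "R < \<bar>x\<bar> \<Longrightarrow> u x = 0" by (rule Rsupp)

lemma S_bound: assumes w: "w \<in> W" shows "S w \<subseteq> {-R..R}"
proof
  fix x assume "x \<in> S w"
  then have "u x \<noteq> 0" using W_nonneg[OF w] by (auto simp: S_def)
  then have "\<not> R < \<bar>x\<bar>" using Rsupp by blast
  then show "x \<in> {-R..R}" by (auto simp: abs_if split: if_splits)
qed

lemma frontier_bound: "w \<in> W \<Longrightarrow> y \<in> frontier (S w) \<Longrightarrow> -R \<le> y \<and> y \<le> R"
proof -
  assume w: "w \<in> W" and y: "y \<in> frontier (S w)"
  have "closure (S w) \<subseteq> {-R..R}" using S_bound[OF w] by (intro closure_minimal) auto
  then show ?thesis using y by (auto simp: frontier_def)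
qed

lemma g_bound: "w \<in> W \<Longrightarrow> 1 \<le> j \<Longrightarrow> j \<le> N w \<Longrightarrow> -R \<le> g j w \<and> g j w \<le> R"
  using frontier_bound g_frontier by blast

lemma k_prefix: assumes w: "w \<in> W" shows "{j \<in> {1..N w}. g j w < y} = {1..k w y}"
  unfolding k_def
proof (rule prefix_card)
  fix i j assume "j \<in> {j \<in> {1..N w}. g j w < y}" "1 \<le> i" "i \<le> j"
  then show "i \<in> {j \<in> {1..N w}. g j w < y}"
    using g_strict[OF w, of i j] by (cases "i = j") auto
qed auto

lemma k'_prefix: assumes w: "w \<in> W" shows "{j \<in> {1..N w}. g j w \<le> y} = {1..k' w y}"
  unfolding k'_def
proof (rule prefix_card)
  fix i j assume "j \<in> {j \<in> {1..N w}. g j w \<le> y}" "1 \<le> i" "i \<le> j"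
  then show "i \<in> {j \<in> {1..N w}. g j w \<le> y}"
    using g_strict[OF w, of i j] by (cases "i = j") auto
qed auto

lemma k_iff: assumes w: "w \<in> W" and j: "1 \<le> j" "j \<le> N w" shows "g j w < y \<longleftrightarrow> j \<le> k w y"
proof -
  have "j \<in> {j \<in> {1..N w}. g j w < y} \<longleftrightarrow> j \<in> {1..k w y}" using k_prefix[OF w, of y] by simp
  then show ?thesis using j by simp
qed

lemma k'_iff: assumes w: "w \<in> W" and j: "1 \<le> j" "j \<le> N w" shows "g j w \<le> y \<longleftrightarrow> j \<le> k' w y"
proof -
  have "j \<in> {j \<in> {1..N w}. g j w \<le> y} \<longleftrightarrow> j \<in> {1..k' w y}" using k'_prefix[OF w, of y] by simp
  then show ?thesis using j by simp
qed

lemma k_le_N: "k w y \<le> N w"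
proof -
  have "k w y \<le> card {1..N w}" unfolding k_def by (rule card_mono) auto
  then show ?thesis by simp
qed

lemma k'_le_N: "k' w y \<le> N w"
proof -
  have "k' w y \<le> card {1..N w}" unfolding k'_def by (rule card_mono) auto
  then show ?thesis by simp
qed

lemma k_mono: "y \<le> z \<Longrightarrow> k w y \<le> k w z"
  unfolding k_def by (rule card_mono) auto

lemma k'_le_k: "y < z \<Longrightarrow> k' w y \<le> k w z"
  unfolding k_def k'_def by (rule card_mono) auto

lemma k_le_k': "k w y \<le> k' w y"
  unfolding k_def k'_def by (rule card_mono) auto

lemma cif: "connected I \<Longrightarrow> I \<inter> frontier T = {} \<Longrightarrow> I \<subseteq> T \<or> I \<inter> T = {}"
  using connected_Int_frontier by blast

lemma structure_notin:
  assumes w: "w \<in> W" and ny: "\<forall>j. 1 \<le> j \<and> j \<le> N w \<longrightarrow> g j w \<noteq> y"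
  shows "u y > w \<longleftrightarrow> odd (k w y)"
proof (cases "k w y = 0")
  case True
  let ?I = "{..y}"
  have disj: "?I \<inter> frontier (S w) = {}"
  proof (rule ccontr)
    assume "?I \<inter> frontier (S w) \<noteq> {}"
    then obtain z where z: "z \<le> y" "z \<in> frontier (S w)" by auto
    then obtain j where j: "1 \<le> j" "j \<le> N w" "g j w = z" using frontier_g[OF w] by blast
    then have "g j w < y" using z ny by force
    then have "j \<le> k w y" using k_iff[OF w j(1,2)] by simp
    then show False using True j(1) by simp
  qed
  define z0 where "z0 = min y (-R-1)"
  have "R < \<bar>z0\<bar>" using Rpos by (simp add: z0_def)
  then have "u z0 = 0" by (rule u_out)
  then have "z0 \<notin> S w" using W_nonneg[OF w] by (simp add: S_def)
  moreover have "z0 \<in> ?I" by (simp add: z0_def)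
  ultimately have "\<not> ?I \<subseteq> S w" by blast
  then have "?I \<inter> S w = {}" using cif[OF path_connected_imp_connected[OF path_connected_Iic] disj] by blast
  then have "y \<notin> S w" by auto
  then show ?thesis using True by (simp add: S_def)
next
  case False
  let ?m = "k w y"
  let ?x0 = "g ?m w"
  have m: "1 \<le> ?m" "?m \<le> N w" using False k_le_N by auto
  have x0y: "?x0 < y" using k_iff[OF w m] by simp
  let ?I = "{?x0<..y}"
  have disj: "?I \<inter> frontier (S w) = {}"
  proof (rule ccontr)
    assume "?I \<inter> frontier (S w) \<noteq> {}"
    then obtain z where z: "?x0 < z" "z \<le> y" "z \<in> frontier (S w)" by auto
    then obtain j where j: "1 \<le> j" "j \<le> N w" "g j w = z" using frontier_g[OF w] by blast
    then have "g j w < y" using z ny by force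
    then have "j \<le> ?m" using k_iff[OF w j(1,2)] by simp
    moreover have "?m < j" using g_less_iff[OF w m j(1,2)] z(1) j(3) by simp
    ultimately show False by simp
  qed
  have conn: "connected ?I" by (rule path_connected_imp_connected[OF path_connected_Ioc])
  show ?thesis
  proof (cases "odd ?m")
    case True
    have "crosses_up u w (\<gamma> ?m w 0)" using up w m True by blast
    then obtain \<delta> where \<delta>: "\<delta> > 0" "\<forall>z\<in>{?x0<..<?x0+\<delta>}. u z > w"
      unfolding crosses_up_def g_def by blast
    define z1 where "z1 = min (?x0 + \<delta>/2) y"
    have "z1 \<in> ?I" "u z1 > w" using \<delta> x0y by (auto simp: z1_def)
    then have "\<not> (?I \<inter> S w = {})" by (auto simp: S_def)
    then have "?I \<subseteq> S w" using cif[OF conn disj] by blast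
    then have "y \<in> S w" using x0y by auto
    then show ?thesis using True by (simp add: S_def)
  next
    case False
    have "crosses_down u w (\<gamma> ?m w 0)" using down w m False by blast
    then obtain \<delta> where \<delta>: "\<delta> > 0" "\<forall>z\<in>{?x0<..<?x0+\<delta>}. \<not> u z > w"
      unfolding crosses_down_def g_def by (auto simp: not_less)
    define z1 where "z1 = min (?x0 + \<delta>/2) y"
    have "z1 \<in> ?I" "\<not> u z1 > w" using \<delta> x0y by (auto simp: z1_def)
    then have "\<not> ?I \<subseteq> S w" by (auto simp: S_def)
    then have "?I \<inter> S w = {}" using cif[OF conn disj] by blast
    then have "y \<notin> S w" using x0y by auto
    then show ?thesis using False by (simp add: S_def)
  qed
qed

lemma k_at_g:
  assumes w: "w \<in> W" and j: "1 \<le> j" "j \<le> N w"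
  shows "k w (g j w) = j - 1" "k' w (g j w) = j"
proof -
  have A: "i \<le> k w (g j w) \<longleftrightarrow> i < j" if "1 \<le> i" "i \<le> N w" for i
    using k_iff[OF w that, of "g j w"] g_less_iff[OF w that j] by simp
  have B: "i \<le> k' w (g j w) \<longleftrightarrow> i \<le> j" if "1 \<le> i" "i \<le> N w" for i
    using k'_iff[OF w that, of "g j w"] g_less_iff[OF w that j] g_eq_iff[OF w that j] by (auto simp: order_le_less)
  have k1: "k w (g j w) \<le> N w" "k' w (g j w) \<le> N w" using k_le_N k'_le_N by auto
  show "k w (g j w) = j - 1"
  proof (rule ccontr)
    assume ne: "k w (g j w) \<noteq> j - 1"
    show False
    proof (cases "k w (g j w) < j - 1")
      case True
      then have "1 \<le> j - 1" "j - 1 \<le> N w" using j by auto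
      then show False using A[of "j - 1"] True by auto
    next
      case False
      then have "j \<le> k w (g j w)" using ne by auto
      then show False using A[of j] j by auto
    qed
  qed
  show "k' w (g j w) = j"
  proof (rule ccontr)
    assume ne: "k' w (g j w) \<noteq> j"
    show False
    proof (cases "k' w (g j w) < j")
      case True then show False using B[of j] j by auto
    next
      case False
      then have "Suc j \<le> k' w (g j w)" using ne by auto
      then show False using B[of "Suc j"] k1 j by auto
    qed
  qed
qed

lemma structure_gen:
  assumes w: "w \<in> W"
  shows "\<exists>a. k w y \<le> a \<and> a \<le> k' w y \<and> (u y > w \<longleftrightarrow> odd a)"
proof (cases "\<exists>j. 1 \<le> j \<and> j \<le> N w \<and> g j w = y")
  case True
  then obtain j where j: "1 \<le> j" "j \<le> N w" "g j w = y" by blast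
  have kk: "k w y = j - 1" "k' w y = j" using k_at_g[OF w j(1,2)] j(3) by auto
  show ?thesis
  proof (cases "u y > w \<longleftrightarrow> odd (j - 1)")
    case True then show ?thesis using kk by (intro exI[of _ "j - 1"]) auto
  next
    case False
    then have "u y > w \<longleftrightarrow> odd j" using j(1) by (cases j) auto
    then show ?thesis using kk by (intro exI[of _ j]) auto
  qed
next
  case False
  then have "\<forall>j. 1 \<le> j \<and> j \<le> N w \<longrightarrow> g j w \<noteq> y" by blast
  then show ?thesis using structure_notin[OF w] k_le_k'[of w y] by blast
qed

end


lemma leb_Ico: "l \<le> r \<Longrightarrow> emeasure lebesgue {l..<r} = ennreal (r - l)"
  by simp

lemma ev_left_close: assumes "eventually P (at_left (x::real))" "e > 0" shows "\<exists>z. P z \<and> z < x \<and> x - z < e"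
proof -
  obtain b where b: "b < x" "\<forall>y>b. y < x \<longrightarrow> P y" using assms(1) eventually_at_left_field[of P x]
    by (metis dense)
  define z where "z = (max b (x - e) + x) / 2"
  have "b < z" "z < x" "x - z < e" using b assms(2) by (auto simp: z_def max_def field_simps)
  then show ?thesis using b by blast
qed

lemma change_exists: "(\<sigma>::nat \<Rightarrow> bool) a \<noteq> \<sigma> b \<Longrightarrow> a < b \<Longrightarrow> \<exists>i. a \<le> i \<and> i < b \<and> \<sigma> i \<noteq> \<sigma> (Suc i)"
proof (induction b)
  case 0 then show ?case by simp
next
  case (Suc b)
  show ?case
  proof (cases "\<sigma> b = \<sigma> (Suc b)")
    case True
    then have "a < b" using Suc.prems by (cases "a = b") auto
    then show ?thesis using Suc True by (metis less_Suc_eq)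
  next
    case False
    then show ?thesis using Suc.prems by (intro exI[of _ b]) auto
  qed
qed

lemma idx_mono: "(\<forall>j<m. (idx::nat \<Rightarrow> nat) j < idx (Suc j)) \<Longrightarrow> j \<le> j' \<Longrightarrow> j' \<le> m \<Longrightarrow> idx j \<le> idx j'"
proof (induction j')
  case 0 then show ?case by simp
next
  case (Suc j')
  show ?case
  proof (cases "j = Suc j'")
    case True then show ?thesis by simp
  next
    case False
    then have "idx j \<le> idx j'" using Suc by simp
    moreover have "idx j' < idx (Suc j')" using Suc.prems by simp
    ultimately show ?thesis by simp
  qed
qed

lemma alternation_count:
  fixes \<sigma> :: "nat \<Rightarrow> bool" and idx :: "nat \<Rightarrow> nat"
  assumes inc: "\<forall>j<m. idx j < idx (Suc j)" and last: "idx m \<le> n"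
    and alt: "\<forall>j<m. \<sigma> (idx j) \<noteq> \<sigma> (idx (Suc j))"
  shows "m \<le> card {i. i < n \<and> \<sigma> i \<noteq> \<sigma> (Suc i)}"
proof -
  have ex: "\<forall>j<m. \<exists>i. idx j \<le> i \<and> i < idx (Suc j) \<and> \<sigma> i \<noteq> \<sigma> (Suc i)"
    using change_exists alt inc by blast
  then obtain c where c: "\<forall>j<m. idx j \<le> c j \<and> c j < idx (Suc j) \<and> \<sigma> (c j) \<noteq> \<sigma> (Suc (c j))"
    by metis
  have inj: "inj_on c {..<m}"
  proof (rule inj_onI)
    fix j j' assume jj: "j \<in> {..<m}" "j' \<in> {..<m}" "c j = c j'"
    show "j = j'"
    proof (rule ccontr)
      assume "j \<noteq> j'"
      then consider "j < j'" | "j' < j" by linarith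
      then show False
      proof cases
        case 1
        have "idx (Suc j) \<le> idx j'" using idx_mono[OF inc, of "Suc j" j'] 1 jj by auto
        then show False using c jj 1 by (metis leD lessThan_iff order_less_le_trans)
      next
        case 2
        have "idx (Suc j') \<le> idx j" using idx_mono[OF inc, of "Suc j'" j] 2 jj by auto
        then show False using c jj 2 by (metis leD lessThan_iff order_less_le_trans)
      qed
    qed
  qed
  have sub: "c ` {..<m} \<subseteq> {i. i < n \<and> \<sigma> i \<noteq> \<sigma> (Suc i)}"
  proof
    fix i assume "i \<in> c ` {..<m}"
    then obtain j where j: "j < m" "i = c j" by auto
    have "idx (Suc j) \<le> idx m" using idx_mono[OF inc, of "Suc j" m] j by auto
    then show "i \<in> {i. i < n \<and> \<sigma> i \<noteq> \<sigma> (Suc i)}" using c j last by force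
  qed
  have "m = card (c ` {..<m})" using inj by (simp add: card_image)
  also have "\<dots> \<le> card {i. i < n \<and> \<sigma> i \<noteq> \<sigma> (Suc i)}" by (rule card_mono[OF _ sub]) auto
  finally show ?thesis .
qed

lemma changes_bound:
  fixes \<sigma> :: "nat \<Rightarrow> bool" and a :: "nat \<Rightarrow> nat"
  assumes "\<forall>i<n. a i \<le> a (Suc i)" "\<forall>i\<le>n. \<sigma> i = odd (a i)"
  shows "card {i. i < n \<and> \<sigma> i \<noteq> \<sigma> (Suc i)} + a 0 \<le> a n"
  using assms
proof (induction n)
  case 0 then show ?case by simp
next
  case (Suc n)
  have IH: "card {i. i < n \<and> \<sigma> i \<noteq> \<sigma> (Suc i)} + a 0 \<le> a n" using Suc by auto
  have an: "a n \<le> a (Suc n)" using Suc.prems by auto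
  show ?case
  proof (cases "\<sigma> n = \<sigma> (Suc n)")
    case True
    then have "{i. i < Suc n \<and> \<sigma> i \<noteq> \<sigma> (Suc i)} = {i. i < n \<and> \<sigma> i \<noteq> \<sigma> (Suc i)}"
      by (auto simp: less_Suc_eq)
    then show ?thesis using IH an by simp
  next
    case False
    then have eq: "{i. i < Suc n \<and> \<sigma> i \<noteq> \<sigma> (Suc i)} = insert n {i. i < n \<and> \<sigma> i \<noteq> \<sigma> (Suc i)}"
      by (auto simp: less_Suc_eq)
    have "a n \<noteq> a (Suc n)" using False Suc.prems by auto
    then have "a n < a (Suc n)" using an by simp
    have fin: "finite {i. i < n \<and> \<sigma> i \<noteq> \<sigma> (Suc i)}" by auto
    have "card {i. i < Suc n \<and> \<sigma> i \<noteq> \<sigma> (Suc i)} = Suc (card {i. i < n \<and> \<sigma> i \<noteq> \<sigma> (Suc i)})"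
      unfolding eq by (rule card_insert_disjoint[OF fin]) auto
    then show ?thesis using IH \<open>a n < a (Suc n)\<close> by linarith
  qed
qed

context setting begin

lemma between:
  assumes w: "w \<in> W" and j: "1 \<le> j" "j \<le> N w"
  shows "(ul (g j w) \<le> w \<and> w \<le> u (g j w)) \<or> (u (g j w) \<le> w \<and> w \<le> ul (g j w))"
proof (cases "odd j")
  case True
  have "crosses_up u w (\<gamma> j w 0)" using up w j True by blast
  then obtain \<delta> where \<delta>: "\<delta> > 0" "\<forall>y\<in>{g j w-\<delta><..<g j w}. u y \<le> w" "\<forall>y\<in>{g j w<..<g j w+\<delta>}. u y > w"
    unfolding crosses_up_def g_def by blast
  have "eventually (\<lambda>y. u y \<le> w) (at_left (g j w))"
    unfolding eventually_at_left_field using \<delta> by (intro exI[of _ "g j w - \<delta>"]) auto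
  then have 1: "ul (g j w) \<le> w"
    by (rule tendsto_upperbound[OF u_tendsto_left]) (simp add: trivial_limit_at_left_real)
  have "eventually (\<lambda>y. w \<le> u y) (at_right (g j w))"
    unfolding eventually_at_right_field using \<delta> by (intro exI[of _ "g j w + \<delta>"]) (auto simp: less_imp_le)
  then have 2: "w \<le> u (g j w)"
    by (rule tendsto_lowerbound[OF u_right]) (simp add: trivial_limit_at_right_real)
  show ?thesis using 1 2 by simp
next
  case False
  have "crosses_down u w (\<gamma> j w 0)" using down w j False by blast
  then obtain \<delta> where \<delta>: "\<delta> > 0" "\<forall>y\<in>{g j w-\<delta><..<g j w}. u y > w" "\<forall>y\<in>{g j w<..<g j w+\<delta>}. u y \<le> w"
    unfolding crosses_down_def g_def by blast
  have "eventually (\<lambda>y. w \<le> u y) (at_left (g j w))"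
    unfolding eventually_at_left_field using \<delta> by (intro exI[of _ "g j w - \<delta>"]) (auto simp: less_imp_le)
  then have 1: "w \<le> ul (g j w)"
    by (rule tendsto_lowerbound[OF u_tendsto_left]) (simp add: trivial_limit_at_left_real)
  have "eventually (\<lambda>y. u y \<le> w) (at_right (g j w))"
    unfolding eventually_at_right_field using \<delta> by (intro exI[of _ "g j w + \<delta>"]) auto
  then have 2: "u (g j w) \<le> w"
    by (rule tendsto_upperbound[OF u_right]) (simp add: trivial_limit_at_right_real)
  show ?thesis using 1 2 by simp
qed

lemma strictly_between_frontier:
  assumes w: "w \<in> W" and bw: "(ul x < w \<and> w < u x) \<or> (u x < w \<and> w < ul x)"
  shows "\<exists>j. 1 \<le> j \<and> j \<le> N w \<and> g j w = x"
proof -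
  have "x \<in> frontier (S w)"
  proof (cases "ul x < w \<and> w < u x")
    case True
    have ev: "eventually (\<lambda>z. u z < w) (at_left x)"
      using order_tendstoD(2)[OF u_tendsto_left] True by blast
    show ?thesis unfolding frontier_straddle
    proof (intro allI impI conjI)
      fix e :: real assume e: "e > 0"
      show "\<exists>y\<in>S w. dist x y < e" using True e by (intro bexI[of _ x]) (auto simp: S_def)
      obtain z where "u z < w" "z < x" "x - z < e" using ev_left_close[OF ev e] by blast
      then show "\<exists>y. y \<notin> S w \<and> dist x y < e" by (intro exI[of _ z]) (auto simp: S_def dist_real_def)
    qed
  next
    case False
    then have F: "u x < w" "w < ul x" using bw by auto
    have ev: "eventually (\<lambda>z. w < u z) (at_left x)"
      using order_tendstoD(1)[OF u_tendsto_left] F by blast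
    show ?thesis unfolding frontier_straddle
    proof (intro allI impI conjI)
      fix e :: real assume e: "e > 0"
      show "\<exists>y. y \<notin> S w \<and> dist x y < e" using F e by (intro exI[of _ x]) (auto simp: S_def)
      obtain z where "w < u z" "z < x" "x - z < e" using ev_left_close[OF ev e] by blast
      then show "\<exists>y\<in>S w. dist x y < e" by (intro bexI[of _ z]) (auto simp: S_def dist_real_def)
    qed
  qed
  then show ?thesis using frontier_g[OF w] by blast
qed

end


lemma real_seq_mono: "(\<forall>j<m. (f::nat \<Rightarrow> real) j < f (Suc j)) \<Longrightarrow> i \<le> j \<Longrightarrow> j \<le> m \<Longrightarrow> f i \<le> f j"
proof (induction j)
  case 0 then show ?case by simp
next
  case (Suc j)
  show ?case
  proof (cases "i = Suc j")
    case True then show ?thesis by simp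
  next
    case False
    then have "f i \<le> f j" using Suc by simp
    moreover have "f j < f (Suc j)" using Suc.prems by simp
    ultimately show ?thesis by simp
  qed
qed

lemma Ch_iff: "w \<in> {min a b..<max a b} \<longleftrightarrow> ((a::real) > w) \<noteq> (b > w)"
  by (auto simp: min_def max_def)

lemma sum_indicator_card:
  "(\<Sum>i<(n::nat). indicator (A i) w :: ennreal) = of_nat (card {i. i < n \<and> w \<in> A i})"
proof -
  have "(\<Sum>i<n. indicator (A i) w :: ennreal) = (\<Sum>i<n. of_bool (w \<in> A i))"
    by (simp add: indicator_def)
  also have "\<dots> = of_nat (card ({..<n} \<inter> {i. w \<in> A i}))"
    using sum_of_bool_eq[of "{..<n}" "\<lambda>i. w \<in> A i"] by simp
  also have "{..<n} \<inter> {i. w \<in> A i} = {i. i < n \<and> w \<in> A i}" by auto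
  finally show ?thesis .
qed

context setting begin

definition chg :: "real list \<Rightarrow> real \<Rightarrow> ennreal" where
  "chg xs w = (\<Sum>i < length xs - 1. indicator {min (u (xs!i)) (u (xs ! Suc i))..<max (u (xs!i)) (u (xs ! Suc i))} w)"

lemma chg_borel: "chg xs \<in> borel_measurable lebesgue"
  unfolding chg_def by (intro borel_measurable_sum borel_measurable_indicator) auto

lemma chg_integral: "(\<integral>\<^sup>+ w. chg xs w \<partial>lebesgue) = ennreal (lv u xs)"
proof -
  have "(\<integral>\<^sup>+ w. chg xs w \<partial>lebesgue) = (\<Sum>i < length xs - 1. emeasure lebesgue {min (u (xs!i)) (u (xs ! Suc i))..<max (u (xs!i)) (u (xs ! Suc i))})"
    unfolding chg_def by (subst nn_integral_sum) (auto intro!: borel_measurable_indicator)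
  also have "\<dots> = (\<Sum>i < length xs - 1. ennreal \<bar>u (xs ! Suc i) - u (xs!i)\<bar>)"
    by (intro sum.cong refl) (simp add: min_def max_def)
  also have "\<dots> = ennreal (lv u xs)" by (simp add: lv_def)
  finally show ?thesis .
qed

lemma chg_card: "chg xs w = of_nat (card {i. i < length xs - 1 \<and> (u (xs!i) > w) \<noteq> (u (xs ! Suc i) > w)})"
  unfolding chg_def sum_indicator_card Ch_iff ..

lemma chg_zero_out: assumes "w \<notin> {0..M}" shows "chg xs w = 0"
proof -
  have "(w < u a) = (w < u b)" for a b
  proof (cases "w < 0")
    case True then show ?thesis using range[rule_format, of a] range[rule_format, of b] by linarith
  next
    case False then have "M < w" using assms by auto
    then show ?thesis using range[rule_format, of a] range[rule_format, of b] by linarith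
  qed
  then have "{i. i < length xs - 1 \<and> (u (xs!i) > w) \<noteq> (u (xs ! Suc i) > w)} = {}" by auto
  then show ?thesis unfolding chg_card by simp
qed

lemma chg_le_k:
  assumes w: "w \<in> W" and xs: "sorted_wrt (<) xs" "set xs \<subseteq> {..<x}"
  shows "chg xs w \<le> of_nat (k w x)"
proof (cases "xs = []")
  case True then show ?thesis by (simp add: chg_def)
next
  case False
  define n where "n = length xs - 1"
  have len: "length xs = Suc n" using False by (simp add: n_def)
  define \<sigma> where "\<sigma> i = (u (xs!i) > w)" for i
  have "\<forall>i. \<exists>a. k w (xs!i) \<le> a \<and> a \<le> k' w (xs!i) \<and> (u (xs!i) > w \<longleftrightarrow> odd a)"
    using structure_gen[OF w] by blast
  then obtain a where a: "\<And>i. k w (xs!i) \<le> a i \<and> a i \<le> k' w (xs!i) \<and> (u (xs!i) > w \<longleftrightarrow> odd (a i))"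
    by metis
  have amono: "\<forall>i<n. a i \<le> a (Suc i)"
  proof (intro allI impI)
    fix i assume i: "i < n"
    have "xs ! i < xs ! Suc i" using xs(1) i len by (auto simp: sorted_wrt_iff_nth_less)
    then have "k' w (xs!i) \<le> k w (xs ! Suc i)" by (rule k'_le_k)
    then show "a i \<le> a (Suc i)" using a[of i] a[of "Suc i"] by linarith
  qed
  have "card {i. i < n \<and> \<sigma> i \<noteq> \<sigma> (Suc i)} + a 0 \<le> a n"
    by (rule changes_bound) (use amono a in \<open>auto simp: \<sigma>_def\<close>)
  moreover have "a n \<le> k w x"
  proof -
    have "xs ! n \<in> set xs" using len by simp
    then have "xs ! n < x" using xs(2) by auto
    then show ?thesis using a[of n] k'_le_k[of "xs!n" x w] by linarith
  qed
  ultimately have "card {i. i < n \<and> \<sigma> i \<noteq> \<sigma> (Suc i)} \<le> k w x" by linarith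
  then show ?thesis unfolding chg_card n_def[symmetric] \<sigma>_def by simp
qed

definition a0 where "a0 = -R - 1"

definition grid :: "nat \<Rightarrow> real \<Rightarrow> real list" where
  "grid n x = map (\<lambda>i. a0 + (x - a0) * real i / real (Suc n)) [0..<Suc n]"

lemma grid_props:
  assumes "a0 < x"
  shows "sorted_wrt (<) (grid n x)" "set (grid n x) \<subseteq> {..<x}"
proof -
  have nth: "i < Suc n \<Longrightarrow> grid n x ! i = a0 + (x - a0) * real i / real (Suc n)" for i
    by (simp add: grid_def del: upt_Suc)
  have len: "length (grid n x) = Suc n" by (simp add: grid_def)
  show "sorted_wrt (<) (grid n x)"
    unfolding sorted_wrt_iff_nth_less len
  proof (intro allI impI)
    fix i j assume ij: "i < j" "j < Suc n"
    have "(x - a0) * real i < (x - a0) * real j" using ij assms by simp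
    then have "(x - a0) * real i / real (Suc n) < (x - a0) * real j / real (Suc n)"
      by (intro divide_strict_right_mono) auto
    then show "grid n x ! i < grid n x ! j" using ij by (simp add: nth)
  qed
  show "set (grid n x) \<subseteq> {..<x}"
  proof
    fix y assume "y \<in> set (grid n x)"
    then obtain i where i: "i < Suc n" "y = a0 + (x - a0) * real i / real (Suc n)"
      unfolding grid_def set_map by (auto simp del: upt_Suc)
    have "real i < real (Suc n)" using i(1) by simp
    then have "(x - a0) * real i < (x - a0) * real (Suc n)" using assms by simp
    then have "(x - a0) * real i / real (Suc n) < (x - a0)"
      by (subst pos_divide_less_eq) (auto simp: mult.commute)
    then show "y \<in> {..<x}" using i by simp
  qed
qed

lemma k_eq:
  assumes w: "w \<in> W" and j: "j \<le> N w" and h: "\<And>i. 1 \<le> i \<Longrightarrow> i \<le> N w \<Longrightarrow> (g i w < y \<longleftrightarrow> i \<le> j)"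
  shows "k w y = j"
proof -
  have "{i \<in> {1..N w}. g i w < y} = {1..j}" using h j by auto
  then show ?thesis by (simp add: k_def)
qed

lemma grid_count:
  assumes w: "w \<in> W" and x: "a0 < x"
  shows "eventually (\<lambda>n. of_nat (k w x) \<le> chg (grid n x) w) sequentially"
proof -
  define m where "m = k w x"
  have mN: "m \<le> N w" using k_le_N by (simp add: m_def)
  define G where "G j = (if j = 0 then a0 else if j \<le> m then g j w else x)" for j
  have gm: "1 \<le> i \<Longrightarrow> i \<le> N w \<Longrightarrow> g i w < x \<longleftrightarrow> i \<le> m" for i using k_iff[OF w] by (simp add: m_def)
  have Ginc: "\<forall>j<Suc m. G j < G (Suc j)"
  proof (intro allI impI)
    fix j assume j: "j < Suc m"
    show "G j < G (Suc j)"
    proof (cases "j = 0")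
      case True
      show ?thesis
      proof (cases "m = 0")
        case True then show ?thesis using x \<open>j = 0\<close> by (simp add: G_def)
      next
        case False
        then have "-R \<le> g 1 w" using g_bound[OF w, of 1] mN by auto
        then show ?thesis using \<open>j = 0\<close> False by (simp add: G_def a0_def)
      qed
    next
      case False
      show ?thesis
      proof (cases "Suc j \<le> m")
        case True
        then show ?thesis using g_strict[OF w, of j "Suc j"] False mN by (simp add: G_def)
      next
        case False'': False
        then have "j = m" using j by simp
        then have "g j w < x" using gm[of j] False mN by simp
        then show ?thesis using \<open>j = m\<close> False by (simp add: G_def)
      qed
    qed
  qed
  have Gmono: "i \<le> j \<Longrightarrow> j \<le> Suc m \<Longrightarrow> G i \<le> G j" for i j by (rule real_seq_mono[OF Ginc])
  have Gstrict: "i < j \<Longrightarrow> j \<le> Suc m \<Longrightarrow> G i < G j" for i j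
    using Gmono[of "Suc i" j] Ginc by (meson Suc_leI le_less_trans less_le_trans not_le order.refl)
  have GSx: "G (Suc j) \<le> x" if "j \<le> m" for j using Gmono[of "Suc j" "Suc m"] that by (simp add: G_def)
  have G0: "a0 \<le> G j" if "j \<le> Suc m" for j using Gmono[of 0 j] that by (simp add: G_def)
  have lim: "(\<lambda>n. (x - a0) * inverse (real (Suc n))) \<longlonglongrightarrow> 0"
    by (rule tendsto_mult_right_zero[OF LIMSEQ_inverse_real_of_nat])
  have "\<forall>j\<in>{..m}. eventually (\<lambda>n. (x - a0) * inverse (real (Suc n)) < G (Suc j) - G j) sequentially"
    using Ginc by (intro ballI order_tendstoD(2)[OF lim]) auto
  then have "eventually (\<lambda>n. \<forall>j\<in>{..m}. (x - a0) * inverse (real (Suc n)) < G (Suc j) - G j) sequentially"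
    by (rule eventually_ball_finite[rotated]) simp
  then show ?thesis
  proof eventually_elim
    case (elim n)
    define h where "h = (x - a0) / real (Suc n)"
    have hpos: "h > 0" using x by (simp add: h_def)
    have hgap: "j \<le> m \<Longrightarrow> h < G (Suc j) - G j" for j using elim by (simp add: h_def divide_inverse)
    define p where "p i = a0 + real i * h" for i
    have gridp: "i < Suc n \<Longrightarrow> grid n x ! i = p i" for i
      by (simp add: grid_def p_def h_def del: upt_Suc)
    have pstrict: "i < i' \<Longrightarrow> p i < p i'" for i i' using hpos by (simp add: p_def)
    define idx where "idx j = nat \<lfloor>(G j - a0) / h\<rfloor> + 1" for j
    have pidx: "G j < p (idx j) \<and> p (idx j) \<le> G j + h" if "j \<le> Suc m" for j
    proof -
      define q where "q = (G j - a0) / h"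
      have q0: "0 \<le> q" using G0[OF that] hpos by (simp add: q_def)
      have fl: "real (idx j) = of_int \<lfloor>q\<rfloor> + 1" unfolding idx_def q_def[symmetric] using q0 by simp
      have "of_int \<lfloor>q\<rfloor> \<le> q" "q < of_int \<lfloor>q\<rfloor> + 1" by linarith+
      then have "q < real (idx j)" "real (idx j) \<le> q + 1" using fl by linarith+
      then have "q * h < real (idx j) * h" "real (idx j) * h \<le> (q + 1) * h" using hpos
        by (auto intro: mult_right_mono)
      moreover have "q * h = G j - a0" using hpos by (simp add: q_def)
      ultimately show ?thesis by (simp add: p_def algebra_simps)
    qed
    have pin: "G j < p (idx j) \<and> p (idx j) < G (Suc j)" if "j \<le> m" for j
      using pidx[of j] hgap[OF that] that by auto
    have idxn: "idx j \<le> n" if "j \<le> m" for j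
    proof -
      have "p (idx j) < x" using pin[OF that] GSx[OF that] by simp
      then have "real (idx j) * h < real (Suc n) * h" using hpos by (simp add: p_def h_def)
      then have "real (idx j) < real (Suc n)" using hpos by simp
      then show ?thesis by simp
    qed
    have idxinc: "\<forall>j<m. idx j < idx (Suc j)"
    proof (intro allI impI)
      fix j assume "j < m"
      then have "p (idx j) < p (idx (Suc j))" using pin[of j] pin[of "Suc j"] by auto
      then have "real (idx j) * h < real (idx (Suc j)) * h" by (simp add: p_def)
      then have "real (idx j) < real (idx (Suc j))" using hpos by (simp add: mult_less_cancel_right)
      then show "idx j < idx (Suc j)" by simp
    qed
    have sig: "(u (p (idx j)) > w) \<longleftrightarrow> odd j" if "j \<le> m" for j
    proof -
      let ?y = "p (idx j)"
      have cmp: "g i w < ?y \<longleftrightarrow> i \<le> j" "g i w \<noteq> ?y" if "1 \<le> i" "i \<le> N w" for i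
      proof -
        have "(g i w < ?y \<longleftrightarrow> i \<le> j) \<and> g i w \<noteq> ?y"
        proof (cases "i \<le> m")
          case True
          then have Gi: "G i = g i w" using that by (simp add: G_def)
          show ?thesis
          proof (cases "i \<le> j")
            case True
            then have "G i \<le> G j" using Gmono \<open>j \<le> m\<close> by simp
            then show ?thesis using True Gi pin[OF \<open>j \<le> m\<close>] by auto
          next
            case False
            then have "G (Suc j) \<le> G i" using Gmono \<open>i \<le> m\<close> by simp
            then show ?thesis using False Gi pin[OF \<open>j \<le> m\<close>] by auto
          qed
        next
          case False
          then have "\<not> g i w < x" using gm[OF that] by simp
          moreover have "?y < x" using pin[OF \<open>j \<le> m\<close>] GSx[OF \<open>j \<le> m\<close>] by simp
          ultimately show ?thesis using False \<open>j \<le> m\<close> by auto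
        qed
        then show "g i w < ?y \<longleftrightarrow> i \<le> j" "g i w \<noteq> ?y" by auto
      qed
      have "k w ?y = j" by (rule k_eq[OF w]) (use that mN cmp in auto)
      moreover have "u ?y > w \<longleftrightarrow> odd (k w ?y)" by (rule structure_notin[OF w]) (use cmp in auto)
      ultimately show ?thesis by simp
    qed
    have "m \<le> card {i. i < n \<and> (u (p i) > w) \<noteq> (u (p (Suc i)) > w)}"
    proof (rule alternation_count[of m idx])
      show "\<forall>j<m. idx j < idx (Suc j)" by (rule idxinc)
      show "idx m \<le> n" by (rule idxn) simp
      show "\<forall>j<m. (u (p (idx j)) > w) \<noteq> (u (p (idx (Suc j))) > w)"
        using sig by auto
    qed
    also have "{i. i < n \<and> (u (p i) > w) \<noteq> (u (p (Suc i)) > w)} =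
        {i. i < length (grid n x) - 1 \<and> (u (grid n x ! i) > w) \<noteq> (u (grid n x ! Suc i) > w)}"
    proof (intro Collect_cong)
      fix i
      have len: "length (grid n x) = Suc n" by (simp add: grid_def)
      show "(i < n \<and> (u (p i) > w) \<noteq> (u (p (Suc i)) > w)) =
        (i < length (grid n x) - 1 \<and> (u (grid n x ! i) > w) \<noteq> (u (grid n x ! Suc i) > w))"
      proof (cases "i < n")
        case True then show ?thesis using gridp[of i] gridp[of "Suc i"] len by simp
      next
        case False then show ?thesis using len by simp
      qed
    qed
    finally show ?case unfolding chg_card m_def by simp
  qed
qed

end


context setting begin

definition cW :: "real \<Rightarrow> real \<Rightarrow> ennreal" where
  "cW x w = indicator W w * of_nat (k w x)"

definition IC where "IC x = (\<integral>\<^sup>+ w. cW x w \<partial>lebesgue)"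

lemma W_sets: "W \<in> sets lebesgue"
proof -
  have a: "{0..M} \<in> sets lebesgue" by simp
  have b: "{0..M} - W \<in> sets lebesgue" using W_full by auto
  have "{0..M} - ({0..M} - W) \<in> sets lebesgue" by (rule sets.Diff[OF a b])
  moreover have "{0..M} - ({0..M} - W) = W" using W_sub by auto
  ultimately show ?thesis by simp
qed

lemma k_below: assumes w: "w \<in> W" and x: "x \<le> -R" shows "k w x = 0"
proof -
  have "{j \<in> {1..N w}. g j w < x} = {}" using g_bound[OF w] x by force
  then show ?thesis by (simp add: k_def)
qed

lemma k_above: assumes w: "w \<in> W" and x: "R < x" shows "k w x = N w"
proof -
  have "{j \<in> {1..N w}. g j w < x} = {1..N w}" using g_bound[OF w] x by force
  then show ?thesis by (simp add: k_def)
qed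

lemma cW_below: "x \<le> -R \<Longrightarrow> cW x w = 0"
  by (cases "w \<in> W") (auto simp: cW_def k_below)

lemma cW_SUP: assumes x: "a0 < x" shows "cW x w = (SUP n. indicator W w * chg (grid n x) w)"
proof (cases "w \<in> W")
  case False then show ?thesis by (simp add: cW_def)
next
  case True
  have le: "chg (grid n x) w \<le> of_nat (k w x)" for n
    using chg_le_k[OF True grid_props[OF x]] .
  obtain n0 where "\<forall>n\<ge>n0. of_nat (k w x) \<le> chg (grid n x) w"
    using grid_count[OF True x] by (auto simp: eventually_sequentially)
  then have "of_nat (k w x) \<le> chg (grid n0 x) w" by simp
  then have "of_nat (k w x) = (SUP n. chg (grid n x) w)"
    by (intro antisym SUP_upper2[of n0] SUP_least le) auto
  then show ?thesis using True by (simp add: cW_def)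
qed

lemma cW_borel: "cW x \<in> borel_measurable lebesgue"
proof (cases "a0 < x")
  case True
  have m: "(\<lambda>w. indicator W w * chg (grid n x) w) \<in> borel_measurable lebesgue" for n
    using W_sets chg_borel by measurable
  have "(\<lambda>w. SUP n. indicator W w * chg (grid n x) w) \<in> borel_measurable lebesgue"
    using m by measurable
  moreover have "cW x = (\<lambda>w. SUP n. indicator W w * chg (grid n x) w)"
    using cW_SUP[OF True] by (simp add: fun_eq_iff)
  ultimately show ?thesis by simp
next
  case False
  then have "x \<le> -R" by (simp add: a0_def)
  then have "cW x = (\<lambda>w. 0)" using cW_below by auto
  then show ?thesis by simp
qed

lemma pvar_le_IC: "pvar u {..<x} \<le> IC x"
  unfolding pvar_alt IC_def
proof (rule SUP_least)
  fix xs assume xs: "xs \<in> {xs. sorted_wrt (<) xs \<and> set xs \<subseteq> {..<x}}"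
  have "AE w in lebesgue. chg xs w \<le> cW x w"
  proof (rule AE_I'[OF W_full])
    show "{w \<in> space lebesgue. \<not> chg xs w \<le> cW x w} \<subseteq> {0..M} - W"
    proof
      fix w assume w: "w \<in> {w \<in> space lebesgue. \<not> chg xs w \<le> cW x w}"
      have "w \<notin> W" using w chg_le_k[of w xs x] xs by (auto simp: cW_def)
      moreover have "w \<in> {0..M}"
      proof (rule ccontr)
        assume "w \<notin> {0..M}"
        then have "chg xs w = 0" by (rule chg_zero_out)
        then show False using w by simp
      qed
      ultimately show "w \<in> {0..M} - W" by simp
    qed
  qed
  then have "(\<integral>\<^sup>+ w. chg xs w \<partial>lebesgue) \<le> (\<integral>\<^sup>+ w. cW x w \<partial>lebesgue)"
    by (rule nn_integral_mono_AE)
  then show "ennreal (lv u xs) \<le> (\<integral>\<^sup>+ w. cW x w \<partial>lebesgue)" by (simp add: chg_integral)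
qed

lemma IC_le_pvar: "IC x \<le> pvar u {..<x}"
proof (cases "a0 < x")
  case False
  then have "x \<le> -R" by (simp add: a0_def)
  then have "cW x = (\<lambda>w. 0)" using cW_below by auto
  then show ?thesis by (simp add: IC_def)
next
  case True
  define f where "f n w = indicator W w * chg (grid n x) w" for n w
  have fm: "f n \<in> borel_measurable lebesgue" for n
    unfolding f_def using W_sets chg_borel by measurable
  have pt: "cW x w \<le> liminf (\<lambda>n. f n w)" for w
  proof (cases "w \<in> W")
    case False then show ?thesis by (simp add: cW_def)
  next
    case w: True
    show ?thesis
      using grid_count[OF w True] by (intro Liminf_bounded) (simp add: f_def cW_def w)
  qed
  have "IC x \<le> (\<integral>\<^sup>+ w. liminf (\<lambda>n. f n w) \<partial>lebesgue)"
    unfolding IC_def by (intro nn_integral_mono pt)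
  also have "\<dots> \<le> liminf (\<lambda>n. integral\<^sup>N lebesgue (f n))"
    by (rule nn_integral_liminf[OF fm])
  also have "\<dots> \<le> limsup (\<lambda>n. integral\<^sup>N lebesgue (f n))"
    by (rule Liminf_le_Limsup) simp
  also have "\<dots> \<le> pvar u {..<x}"
  proof (rule Limsup_bounded, rule always_eventually, rule allI)
    fix n
    have "integral\<^sup>N lebesgue (f n) \<le> (\<integral>\<^sup>+ w. chg (grid n x) w \<partial>lebesgue)"
      unfolding f_def by (intro nn_integral_mono) (auto simp: indicator_def)
    also have "\<dots> = ennreal (lv u (grid n x))" by (rule chg_integral)
    also have "\<dots> \<le> pvar u {..<x}" using grid_props[OF True] by (intro lv_le_pvar) auto
    finally show "integral\<^sup>N lebesgue (f n) \<le> pvar u {..<x}" .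
  qed
  finally show ?thesis .
qed

lemma IC_eq: "IC x = pvar u {..<x}"
  using IC_le_pvar pvar_le_IC by (rule antisym)

lemma IC_V: "IC x = ennreal (V x)"
  using IC_eq V_eq by simp

lemma cW_above: "R < x \<Longrightarrow> cW x w = indicator W w * of_nat (N w)"
  by (cases "w \<in> W") (auto simp: cW_def k_above)

lemma IC_above: "R < x \<Longrightarrow> IC x = (\<integral>\<^sup>+ w. indicator W w * of_nat (N w) \<partial>lebesgue)"
  unfolding IC_def by (intro nn_integral_cong) (simp add: cW_above)

lemma pvar_UNIV_eq: "pvar u UNIV = (\<integral>\<^sup>+ w. indicator W w * of_nat (N w) \<partial>lebesgue)"
proof (rule antisym)
  show "pvar u UNIV \<le> (\<integral>\<^sup>+ w. indicator W w * of_nat (N w) \<partial>lebesgue)"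
    unfolding pvar_UNIV_SUP
  proof (rule SUP_least)
    fix x :: real
    have "pvar u {..<x} \<le> pvar u {..<max x (R+1)}" by (rule pvar_mono) auto
    also have "\<dots> = IC (max x (R+1))" by (simp add: IC_eq)
    also have "\<dots> = (\<integral>\<^sup>+ w. indicator W w * of_nat (N w) \<partial>lebesgue)" by (rule IC_above) auto
    finally show "pvar u {..<x} \<le> (\<integral>\<^sup>+ w. indicator W w * of_nat (N w) \<partial>lebesgue)" .
  qed
  have "(\<integral>\<^sup>+ w. indicator W w * of_nat (N w) \<partial>lebesgue) = IC (R+1)" by (rule IC_above[symmetric]) simp
  also have "\<dots> = pvar u {..<R+1}" by (rule IC_eq)
  also have "\<dots> \<le> pvar u UNIV" by (rule pvar_mono) auto
  finally show "(\<integral>\<^sup>+ w. indicator W w * of_nat (N w) \<partial>lebesgue) \<le> pvar u UNIV" .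
qed

end


context setting begin

lemma ul_borel: "ul \<in> borel_measurable borel"
proof (rule borel_measurable_LIMSEQ_real)
  fix x :: real
  have "filterlim (\<lambda>n. x - inverse (real (Suc n))) (at_left x) sequentially"
  proof (rule filterlim_at_withinI)
    show "filterlim (\<lambda>n. x - inverse (real (Suc n))) (nhds x) sequentially"
      using tendsto_diff[OF tendsto_const LIMSEQ_inverse_real_of_nat, of x] by simp
    show "\<forall>\<^sub>F n in sequentially. x - inverse (real (Suc n)) \<in> {..<x} - {x}"
      by (intro always_eventually) auto
  qed
  then show "(\<lambda>n. u (x - inverse (real (Suc n)))) \<longlonglongrightarrow> ul x"
    by (rule filterlim_compose[OF u_tendsto_left])
next
  fix n
  show "(\<lambda>x. u (x - inverse (real (Suc n)))) \<in> borel_measurable borel"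
    using u_borel by measurable
qed

definition Dj where "Dj j = {w \<in> W. 1 \<le> j \<and> j \<le> N w}"

lemma Dj_Dset: "(j, w) \<in> Dset W N \<longleftrightarrow> w \<in> Dj j"
  by (simp add: Dset_def Dj_def)

lemma set_k_ge: "{w \<in> W. j \<le> k w y} \<in> sets lebesgue"
proof -
  have "{w \<in> W. j \<le> k w y} = W \<inter> {w \<in> space lebesgue. of_nat j \<le> cW y w}"
    by (auto simp: cW_def)
  also have "\<dots> \<in> sets lebesgue"
    using W_sets cW_borel[of y] by measurable
  finally show ?thesis .
qed

lemma Dj_sets: "Dj j \<in> sets lebesgue"
proof -
  have "Dj j = (if 1 \<le> j then {w \<in> W. j \<le> k w (R+1)} else {})"
    using k_above[of _ "R+1"] by (auto simp: Dj_def)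
  then show ?thesis using set_k_ge by simp
qed

definition gg where "gg j w = (if w \<in> Dj j then g j w else 0)"

lemma gg_borel: "gg j \<in> borel_measurable lebesgue"
  unfolding borel_measurable_iff_less
proof
  fix y
  have "{w \<in> space lebesgue. gg j w < y} = {w \<in> W. 1 \<le> j \<and> j \<le> k w y} \<union> (- Dj j \<inter> {w. 0 < y})"
  proof (intro set_eqI iffI)
    fix w assume "w \<in> {w \<in> space lebesgue. gg j w < y}"
    then have lt: "gg j w < y" by simp
    show "w \<in> {w \<in> W. 1 \<le> j \<and> j \<le> k w y} \<union> (- Dj j \<inter> {w. 0 < y})"
    proof (cases "w \<in> Dj j")
      case True
      then have "w \<in> W" "1 \<le> j" "j \<le> N w" by (auto simp: Dj_def)
      then show ?thesis using k_iff[of w j y] lt True by (simp add: gg_def)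
    next
      case False then show ?thesis using lt by (simp add: gg_def)
    qed
  next
    fix w assume w: "w \<in> {w \<in> W. 1 \<le> j \<and> j \<le> k w y} \<union> (- Dj j \<inter> {w. 0 < y})"
    show "w \<in> {w \<in> space lebesgue. gg j w < y}"
    proof (cases "w \<in> Dj j")
      case True
      then have "w \<in> W" "1 \<le> j" "j \<le> N w" by (auto simp: Dj_def)
      moreover have "j \<le> k w y" using w True by auto
      ultimately show ?thesis using k_iff[of w j y] True by (simp add: gg_def)
    next
      case False
      have "w \<notin> {w \<in> W. 1 \<le> j \<and> j \<le> k w y}"
        using False k_le_N[of w y] by (auto simp: Dj_def)
      then have "w \<in> - Dj j \<inter> {w. 0 < y}" using w by blast
      then have "0 < y" by (simp split: if_splits)
      then show ?thesis using False by (simp add: gg_def)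
    qed
  qed
  also have "\<dots> \<in> sets lebesgue"
  proof -
    have "{w \<in> W. 1 \<le> j \<and> j \<le> k w y} = (if 1 \<le> j then {w \<in> W. j \<le> k w y} else {})" by auto
    then have a: "{w \<in> W. 1 \<le> j \<and> j \<le> k w y} \<in> sets lebesgue" using set_k_ge by simp
    have b: "- Dj j \<in> sets lebesgue" using Dj_sets Compl_in_sets_lebesgue by blast
    have c: "- Dj j \<inter> {w. 0 < y} = (if 0 < y then - Dj j else {})" by auto
    have d: "- Dj j \<inter> {w. 0 < y} \<in> sets lebesgue" unfolding c using b by simp
    show ?thesis by (rule sets.Un[OF a d])
  qed
  finally show "{w \<in> space lebesgue. gg j w < y} \<in> sets lebesgue" .
qed

definition sfD where "sfD j w = (if w \<in> Dj j then V (gg j w) + \<bar>w - ul (gg j w)\<bar> else 0)"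

lemma sfD_borel: "sfD j \<in> borel_measurable lebesgue"
proof -
  have V: "V \<in> borel_measurable borel" by (rule borel_measurable_mono[OF mono_V])
  have id: "(\<lambda>x::real. x) \<in> borel_measurable lebesgue" by (rule measurable_completion) simp
  have a: "(\<lambda>w. V (gg j w)) \<in> borel_measurable lebesgue" by (rule measurable_compose[OF gg_borel V])
  have b: "(\<lambda>w. ul (gg j w)) \<in> borel_measurable lebesgue" by (rule measurable_compose[OF gg_borel ul_borel])
  have "(\<lambda>w. V (gg j w) + \<bar>w - ul (gg j w)\<bar>) \<in> borel_measurable lebesgue"
    by (intro borel_measurable_add borel_measurable_abs borel_measurable_diff a b id)
  then show ?thesis unfolding sfD_def
    by (intro measurable_If_set) (auto simp: Dj_sets)
qed

lemma sfun_eq: "sfun u \<gamma> j w = V (g j w) + \<bar>w - ul (g j w)\<bar>"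
  by (simp add: sfun_def V_def ul_def g_def)

lemma sfD_eq: "w \<in> Dj j \<Longrightarrow> sfD j w = sfun u \<gamma> j w"
  by (simp add: sfD_def gg_def sfun_eq)

lemma slice_sets: assumes "B \<in> sets borel"
  shows "{w. (j, w) \<in> Dset W N \<and> sfun u \<gamma> j w \<in> B} \<in> sets lebesgue"
proof -
  have "{w. (j, w) \<in> Dset W N \<and> sfun u \<gamma> j w \<in> B} = Dj j \<inter> (sfD j -` B \<inter> space lebesgue)"
    by (auto simp: Dj_Dset sfD_eq)
  also have "\<dots> \<in> sets lebesgue"
    using Dj_sets measurable_sets[OF sfD_borel assms] by auto
  finally show ?thesis .
qed

end


context setting begin

definition TVr where "TVr = enn2real (pvar u UNIV)"

lemma TV_eq: "pvar u UNIV = ennreal TVr"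
  unfolding TVr_def by (rule pvar_eq)

lemma TVr_nonneg: "0 \<le> TVr" by (simp add: TVr_def)

lemma P_le_TV: "P x \<le> TVr"
  using pvar_mono[of "{..x}" UNIV u] by (simp add: P_eq TV_eq TVr_nonneg)

lemma V_below: assumes "x \<le> -R" shows "V x = 0"
proof -
  have "cW x = (\<lambda>w. 0)" using cW_below[OF assms] by (simp add: fun_eq_iff)
  then have "IC x = 0" unfolding IC_def by simp
  then show ?thesis using IC_V V_nonneg by simp
qed

lemma V_above: assumes "R < x" shows "V x = TVr"
proof -
  have "ennreal (V x) = ennreal TVr"
    using IC_V[of x] IC_above[OF assms] pvar_UNIV_eq TV_eq by simp
  then show ?thesis using V_nonneg TVr_nonneg by simp
qed

lemma sf_bounds:
  assumes w: "w \<in> W" and j: "1 \<le> j" "j \<le> N w"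
  shows "V (g j w) \<le> sfun u \<gamma> j w" "sfun u \<gamma> j w \<le> P (g j w)"
proof -
  show "V (g j w) \<le> sfun u \<gamma> j w" by (simp add: sfun_eq)
  have "\<bar>w - ul (g j w)\<bar> \<le> \<bar>u (g j w) - ul (g j w)\<bar>" using between[OF w j] by auto
  then show "sfun u \<gamma> j w \<le> P (g j w)" using P_jump[of "g j w"] by (simp add: sfun_eq)
qed

definition E0 where "E0 x = {w \<in> W. \<exists>j. 1 \<le> j \<and> j \<le> N w \<and> g j w = x}"

lemma k'_split: assumes w: "w \<in> W"
  shows "k' w x = k w x + (if w \<in> E0 x then 1 else 0)"
proof -
  have un: "{j \<in> {1..N w}. g j w \<le> x} = {j \<in> {1..N w}. g j w < x} \<union> {j \<in> {1..N w}. g j w = x}" by auto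
  have "card {j \<in> {1..N w}. g j w = x} = (if w \<in> E0 x then 1 else 0)"
  proof (cases "w \<in> E0 x")
    case True
    then obtain j0 where j0: "1 \<le> j0" "j0 \<le> N w" "g j0 w = x" by (auto simp: E0_def)
    have "{j \<in> {1..N w}. g j w = x} = {j0}" using g_eq_iff[OF w _ _ j0(1,2)] j0 by auto
    then show ?thesis using True by simp
  next
    case False
    then have "{j \<in> {1..N w}. g j w = x} = {}" using w by (auto simp: E0_def)
    then show ?thesis using False by simp
  qed
  moreover have "card ({j \<in> {1..N w}. g j w < x} \<union> {j \<in> {1..N w}. g j w = x}) =
      card {j \<in> {1..N w}. g j w < x} + card {j \<in> {1..N w}. g j w = x}"
    by (rule card_Un_disjoint) auto
  ultimately show ?thesis unfolding k'_def k_def un by simp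
qed

lemma k_INF: assumes w: "w \<in> W"
  shows "(INF n. (of_nat (k w (x + inverse (real (Suc n)))) :: ennreal)) = of_nat (k' w x)"
proof (rule antisym)
  have lim: "(\<lambda>n. x + inverse (real (Suc n))) \<longlonglongrightarrow> x"
    using tendsto_add[OF tendsto_const LIMSEQ_inverse_real_of_nat, of x] by simp
  have "\<forall>j\<in>{1..N w}. eventually (\<lambda>n. g j w \<le> x \<or> x + inverse (real (Suc n)) < g j w) sequentially"
  proof
    fix j assume "j \<in> {1..N w}"
    show "eventually (\<lambda>n. g j w \<le> x \<or> x + inverse (real (Suc n)) < g j w) sequentially"
    proof (cases "g j w \<le> x")
      case True then show ?thesis by simp
    next
      case False
      then have "eventually (\<lambda>n. x + inverse (real (Suc n)) < g j w) sequentially"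
        by (intro order_tendstoD(2)[OF lim]) simp
      then show ?thesis by eventually_elim simp
    qed
  qed
  then have "eventually (\<lambda>n. \<forall>j\<in>{1..N w}. g j w \<le> x \<or> x + inverse (real (Suc n)) < g j w) sequentially"
    by (rule eventually_ball_finite[rotated]) simp
  then obtain n0 where n0: "\<forall>j\<in>{1..N w}. g j w \<le> x \<or> x + inverse (real (Suc n0)) < g j w"
    by (auto simp: eventually_sequentially)
  have "k w (x + inverse (real (Suc n0))) \<le> k' w x"
    unfolding k_def k'_def by (rule card_mono) (use n0 in auto)
  then show "(INF n. (of_nat (k w (x + inverse (real (Suc n)))) :: ennreal)) \<le> of_nat (k' w x)"
    by (intro INF_lower2[of n0]) auto
  show "of_nat (k' w x) \<le> (INF n. (of_nat (k w (x + inverse (real (Suc n)))) :: ennreal))"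
  proof (rule INF_greatest)
    fix n
    have "x < x + inverse (real (Suc n))" by simp
    then have "k' w x \<le> k w (x + inverse (real (Suc n)))" by (rule k'_le_k)
    then show "(of_nat (k' w x) :: ennreal) \<le> of_nat (k w (x + inverse (real (Suc n))))" by simp
  qed
qed

definition cWp where "cWp x w = (INF n. cW (x + inverse (real (Suc n))) w)"

lemma cWp_eq: "cWp x w = cW x w + indicator (E0 x) w"
proof (cases "w \<in> W")
  case False then show ?thesis by (simp add: cWp_def cW_def E0_def)
next
  case True
  have "cWp x w = of_nat (k' w x)" unfolding cWp_def cW_def using k_INF[OF True] True by simp
  also have "\<dots> = cW x w + indicator (E0 x) w" using k'_split[OF True, of x] True
    by (simp add: cW_def indicator_def)
  finally show ?thesis .
qed

lemma cWp_borel: "cWp x \<in> borel_measurable lebesgue"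
  unfolding cWp_def using cW_borel by measurable

lemma E0_sets: "E0 x \<in> sets lebesgue"
proof -
  have "E0 x = {w \<in> space lebesgue. cW x w < cWp x w}"
  proof (intro set_eqI iffI)
    fix w assume w: "w \<in> E0 x"
    then have "w \<in> W" by (simp add: E0_def)
    then show "w \<in> {w \<in> space lebesgue. cW x w < cWp x w}"
      using w by (simp add: cWp_eq cW_def of_nat_less_top)
  next
    fix w assume "w \<in> {w \<in> space lebesgue. cW x w < cWp x w}"
    then have "cW x w < cW x w + indicator (E0 x) w" by (simp add: cWp_eq)
    then show "w \<in> E0 x" by (cases "w \<in> E0 x") auto
  qed
  also have "\<dots> \<in> sets lebesgue" using cW_borel cWp_borel by measurable
  finally show ?thesis .
qed

lemma E0_sub: "E0 x \<subseteq> {min (ul x) (u x)..max (ul x) (u x)}"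
proof
  fix w assume "w \<in> E0 x"
  then obtain j where "w \<in> W" "1 \<le> j" "j \<le> N w" "g j w = x" by (auto simp: E0_def)
  then show "w \<in> {min (ul x) (u x)..max (ul x) (u x)}" using between[of w j] by auto
qed

lemma E0_le: "emeasure lebesgue (E0 x) \<le> ennreal \<bar>u x - ul x\<bar>"
proof -
  have "emeasure lebesgue (E0 x) \<le> emeasure lebesgue {min (ul x) (u x)..max (ul x) (u x)}"
    by (intro emeasure_mono E0_sub) simp
  also have "\<dots> = ennreal \<bar>u x - ul x\<bar>" by (simp add: min_def max_def)
  finally show ?thesis .
qed

lemma cW_mono: "x \<le> y \<Longrightarrow> cW x w \<le> cW y w"
  unfolding cW_def using k_mono[of x y w] by (simp add: indicator_def)

lemma jump_limit:
  assumes gt: "\<And>y. x < y \<Longrightarrow> t < V y"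
  shows "t \<le> V x + \<bar>u x - ul x\<bar>"
proof (cases "t < 0")
  case True then show ?thesis using V_nonneg[of x] by simp
next
  case False
  define f where "f n = cW (x + inverse (real (Suc n)))" for n
  have dec: "decseq f"
  proof (rule decseq_SucI)
    fix n
    have "x + inverse (real (Suc (Suc n))) \<le> x + inverse (real (Suc n))"
      by (simp add: inverse_le_iff_le)
    then show "f (Suc n) \<le> f n" unfolding f_def le_fun_def by (intro allI cW_mono)
  qed
  have fm: "f n \<in> borel_measurable lebesgue" for n unfolding f_def by (rule cW_borel)
  have ffin: "(\<integral>\<^sup>+ w. f n w \<partial>lebesgue) < \<infinity>" for n
    unfolding f_def IC_def[symmetric] IC_V by simp
  have "(\<integral>\<^sup>+ w. (INF n. f n w) \<partial>lebesgue) = (INF n. integral\<^sup>N lebesgue (f n))"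
    by (rule nn_integral_monotone_convergence_INF_decseq[OF dec fm ffin])
  moreover have "(\<integral>\<^sup>+ w. (INF n. f n w) \<partial>lebesgue) = IC x + emeasure lebesgue (E0 x)"
  proof -
    have "(\<integral>\<^sup>+ w. (INF n. f n w) \<partial>lebesgue) = (\<integral>\<^sup>+ w. cW x w + indicator (E0 x) w \<partial>lebesgue)"
      by (intro nn_integral_cong) (simp add: f_def cWp_eq[symmetric] cWp_def)
    also have "\<dots> = IC x + emeasure lebesgue (E0 x)"
      by (subst nn_integral_add) (auto simp: IC_def cW_borel E0_sets intro!: borel_measurable_indicator)
    finally show ?thesis .
  qed
  moreover have "ennreal t \<le> (INF n. integral\<^sup>N lebesgue (f n))"
  proof (rule INF_greatest)
    fix n
    have "t < V (x + inverse (real (Suc n)))" by (rule gt) simp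
    then show "ennreal t \<le> integral\<^sup>N lebesgue (f n)"
      unfolding f_def IC_def[symmetric] IC_V by (simp add: ennreal_leI)
  qed
  ultimately have "ennreal t \<le> ennreal (V x) + emeasure lebesgue (E0 x)" by (simp add: IC_V)
  also have "\<dots> \<le> ennreal (V x) + ennreal \<bar>u x - ul x\<bar>" by (intro add_left_mono E0_le)
  also have "\<dots> = ennreal (V x + \<bar>u x - ul x\<bar>)" using V_nonneg by (simp add: ennreal_plus)
  finally have X: "ennreal t \<le> ennreal (V x + \<bar>u x - ul x\<bar>)" .
  have "0 \<le> V x + \<bar>u x - ul x\<bar>" using V_nonneg[of x] by simp
  then show ?thesis using X by (simp add: ennreal_le_iff)
qed

end


context setting begin

lemma ul_range: "0 \<le> ul x \<and> ul x \<le> M"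
proof
  show "0 \<le> ul x"
    by (rule tendsto_lowerbound[OF u_tendsto_left]) (auto simp: range trivial_limit_at_left_real)
  show "ul x \<le> M"
    by (rule tendsto_upperbound[OF u_tendsto_left]) (auto simp: range trivial_limit_at_left_real)
qed

lemma exists_xt:
  assumes t0: "0 \<le> t" and tT: "t < TVr"
  shows "\<exists>x. V x \<le> t \<and> (\<forall>y>x. t < V y)"
proof -
  define X where "X = {x. V x \<le> t}"
  have ne: "-R-1 \<in> X" using V_below[of "-R-1"] t0 by (simp add: X_def)
  have bd: "x \<le> R" if "x \<in> X" for x
  proof (rule ccontr)
    assume "\<not> x \<le> R"
    then have "V x = TVr" by (intro V_above) simp
    then show False using that tT by (simp add: X_def)
  qed
  have bdd: "bdd_above X" using bd by (intro bdd_aboveI[of _ R]) blast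
  define xt where "xt = Sup X"
  have "pvar u {..<xt} \<le> ennreal t"
    unfolding pvar_lessThan_SUP
  proof (rule SUP_least)
    fix z assume "z \<in> {..<xt}"
    then have "z < Sup X" by (simp add: xt_def)
    then obtain x where x: "x \<in> X" "z < x" using less_cSup_iff[OF _ bdd] ne by blast
    have "P z \<le> V x" using x(2) by (rule P_le_V)
    also have "\<dots> \<le> t" using x(1) by (simp add: X_def)
    finally show "pvar u {..z} \<le> ennreal t" by (simp add: P_eq ennreal_leI)
  qed
  then have "V xt \<le> t" using V_eq[of xt] t0 by (simp add: ennreal_le_iff)
  moreover have "t < V y" if "xt < y" for y
  proof (rule ccontr)
    assume "\<not> t < V y"
    then have "y \<in> X" by (simp add: X_def)
    then have "y \<le> xt" unfolding xt_def using bdd by (rule cSup_upper)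
    then show False using that by simp
  qed
  ultimately show ?thesis by blast
qed

lemma Ed_measure:
  assumes d0: "0 \<le> d" and dJ: "d \<le> \<bar>u x - ul x\<bar>"
  shows "emeasure lebesgue (E0 x \<inter> {ul x - d..ul x + d}) = ennreal d"
proof -
  let ?a = "ul x" and ?b = "u x"
  let ?E = "E0 x \<inter> {ul x - d..ul x + d}"
  let ?N0 = "{0..M} - W"
  have Em: "?E \<in> sets lebesgue" using E0_sets by auto
  have ab: "0 \<le> ?a" "?a \<le> M" "0 \<le> ?b" "?b \<le> M" using ul_range range by auto
  have mem: "w \<in> ?E" if "w \<in> W" "(?a < w \<and> w < ?b) \<or> (?b < w \<and> w < ?a)" "\<bar>w - ?a\<bar> \<le> d" for w
  proof -
    have "\<exists>j. 1 \<le> j \<and> j \<le> N w \<and> g j w = x" by (rule strictly_between_frontier) (use that in auto)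
    then show ?thesis using that by (auto simp: E0_def)
  qed
  have btw: "min ?a ?b \<le> w \<and> w \<le> max ?a ?b" if "w \<in> E0 x" for w
  proof -
    have "w \<in> {min ?a ?b..max ?a ?b}" using E0_sub[of x] that by (rule subsetD)
    then show ?thesis by simp
  qed
  show ?thesis
  proof (cases "?a \<le> ?b")
    case True
    have up: "?E \<subseteq> {?a..?a+d}" using btw True by (auto simp: min_def max_def)
    have lo: "{?a<..<?a+d} - ?N0 \<subseteq> ?E"
    proof
      fix w assume w: "w \<in> {?a<..<?a+d} - ?N0"
      then have "w \<in> W" using ab True dJ by auto
      then show "w \<in> ?E" using mem[of w] w True dJ by auto
    qed
    have "ennreal d = emeasure lebesgue ({?a<..<?a+d} - ?N0)"
      using emeasure_Diff_null_set[OF W_full, of "{?a<..<?a+d}"] d0 by simp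
    also have "\<dots> \<le> emeasure lebesgue ?E" using lo Em by (intro emeasure_mono)
    finally have 1: "ennreal d \<le> emeasure lebesgue ?E" .
    have "emeasure lebesgue ?E \<le> emeasure lebesgue {?a..?a+d}" using up by (intro emeasure_mono) auto
    also have "\<dots> = ennreal d" using d0 by simp
    finally show ?thesis using 1 by (rule antisym)
  next
    case False
    have up: "?E \<subseteq> {?a-d..?a}" using btw False by (auto simp: min_def max_def)
    have lo: "{?a-d<..<?a} - ?N0 \<subseteq> ?E"
    proof
      fix w assume w: "w \<in> {?a-d<..<?a} - ?N0"
      then have "w \<in> W" using ab False dJ by auto
      then show "w \<in> ?E" using mem[of w] w False dJ by auto
    qed
    have "ennreal d = emeasure lebesgue ({?a-d<..<?a} - ?N0)"
      using emeasure_Diff_null_set[OF W_full, of "{?a-d<..<?a}"] d0 by simp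
    also have "\<dots> \<le> emeasure lebesgue ?E" using lo Em by (intro emeasure_mono)
    finally have 1: "ennreal d \<le> emeasure lebesgue ?E" .
    have "emeasure lebesgue ?E \<le> emeasure lebesgue {?a-d..?a}" using up by (intro emeasure_mono) auto
    also have "\<dots> = ennreal d" using d0 by simp
    finally show ?thesis using 1 by (rule antisym)
  qed
qed

end


lemma sum_emeasure_integral:
  assumes "\<And>j. A j \<in> sets lebesgue"
  shows "(\<Sum>j. emeasure lebesgue (A j)) = (\<integral>\<^sup>+ w. (\<Sum>j. indicator (A j) w) \<partial>lebesgue)"
  by (subst nn_integral_suminf) (auto simp: assms intro!: borel_measurable_indicator)

lemma suminf_indicator_card:
  assumes "finite {j::nat. w \<in> A j}"
  shows "(\<Sum>j. indicator (A j) w :: ennreal) = of_nat (card {j. w \<in> A j})"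
proof -
  have "(\<Sum>j. indicator (A j) w :: ennreal) = (\<Sum>j\<in>{j. w \<in> A j}. indicator (A j) w)"
    by (rule suminf_finite[OF assms]) auto
  also have "\<dots> = (\<Sum>j\<in>{j. w \<in> A j}. 1)" by (intro sum.cong) auto
  finally show ?thesis by simp
qed

context setting begin

definition As where "As t j = {w. (j, w) \<in> Dset W N \<and> sfun u \<gamma> j w \<in> {..t}}"

lemma As_sets: "As t j \<in> sets lebesgue"
  unfolding As_def by (rule slice_sets) simp

lemma As_sub: "As t j \<subseteq> Dj j"
  by (auto simp: As_def Dj_Dset)

lemma As_fin: "finite {j. w \<in> As t j}"
proof -
  have "{j. w \<in> As t j} \<subseteq> {1..N w}" by (auto simp: As_def Dset_def)
  then show ?thesis by (rule finite_subset) simp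
qed

lemma Fm_eq: "(\<Sum>j. emeasure lebesgue (As t j)) = emeasure lebesgue ({..t} \<inter> {0<..TVr})"
proof -
  have base: "(\<Sum>j. emeasure lebesgue (As t j)) = (\<integral>\<^sup>+ w. of_nat (card {j. w \<in> As t j}) \<partial>lebesgue)"
    by (simp add: sum_emeasure_integral[OF As_sets] suminf_indicator_card[OF As_fin])
  consider "t < 0" | "TVr \<le> t" | "0 \<le> t" "t < TVr" by linarith
  then show ?thesis
  proof cases
    case 1
    have "As t j = {}" for j
    proof -
      have "sfun u \<gamma> j w \<ge> 0" for w using V_nonneg by (simp add: sfun_eq)
      then show ?thesis using 1 unfolding As_def by (smt (verit) atMost_iff empty_Collect_eq)
    qed
    moreover have "{..t} \<inter> {0<..TVr} = {}" using 1 by auto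
    ultimately show ?thesis by simp
  next
    case 2
    have "As t j = Dj j" for j
    proof -
      have "sfun u \<gamma> j w \<le> t" if "w \<in> Dj j" for w
      proof -
        have w: "w \<in> W" "1 \<le> j" "j \<le> N w" using that by (auto simp: Dj_def)
        show ?thesis using sf_bounds(2)[OF w] P_le_TV[of "g j w"] 2 by linarith
      qed
      then show ?thesis by (auto simp: As_def Dj_Dset)
    qed
    then have "(\<Sum>j. emeasure lebesgue (As t j)) = (\<integral>\<^sup>+ w. of_nat (card {j. w \<in> Dj j}) \<partial>lebesgue)"
      using base by simp
    also have "\<dots> = (\<integral>\<^sup>+ w. indicator W w * of_nat (N w) \<partial>lebesgue)"
    proof (intro nn_integral_cong)
      fix w
      show "(of_nat (card {j. w \<in> Dj j}) :: ennreal) = indicator W w * of_nat (N w)"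
      proof (cases "w \<in> W")
        case True
        then have "{j. w \<in> Dj j} = {1..N w}" by (auto simp: Dj_def)
        then show ?thesis using True by simp
      next
        case False
        then have "{j. w \<in> Dj j} = {}" by (auto simp: Dj_def)
        then show ?thesis using False by simp
      qed
    qed
    also have "\<dots> = ennreal TVr" using pvar_UNIV_eq TV_eq by simp
    also have "\<dots> = emeasure lebesgue ({..t} \<inter> {0<..TVr})"
    proof -
      have "{..t} \<inter> {0<..TVr} = {0<..TVr}" using 2 by auto
      then show ?thesis using TVr_nonneg by simp
    qed
    finally show ?thesis .
  next
    case 3
    obtain xt where xt: "V xt \<le> t" "\<And>y. xt < y \<Longrightarrow> t < V y" using exists_xt[OF 3] by blast
    define d where "d = t - V xt"
    have d0: "0 \<le> d" using xt by (simp add: d_def)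
    have dJ: "d \<le> \<bar>u xt - ul xt\<bar>" using jump_limit[of xt t] xt by (simp add: d_def)
    define Ed where "Ed = E0 xt \<inter> {ul xt - d..ul xt + d}"
    have Ed_sets: "Ed \<in> sets lebesgue" using E0_sets by (auto simp: Ed_def)
    have char: "sfun u \<gamma> j w \<le> t \<longleftrightarrow> g j w < xt \<or> (g j w = xt \<and> \<bar>w - ul xt\<bar> \<le> d)"
      if w: "w \<in> W" "1 \<le> j" "j \<le> N w" for w j
    proof (cases "g j w" xt rule: linorder_cases)
      case less
      have "sfun u \<gamma> j w \<le> P (g j w)" by (rule sf_bounds(2)[OF w])
      also have "\<dots> \<le> V xt" using less by (rule P_le_V)
      finally show ?thesis using less xt(1) by simp
    next
      case equal then show ?thesis by (simp add: sfun_eq d_def) linarith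
    next
      case greater
      have "t < V (g j w)" using greater by (rule xt(2))
      then show ?thesis using sf_bounds(1)[OF w] greater by simp
    qed
    have pt: "(of_nat (card {j. w \<in> As t j}) :: ennreal) = cW xt w + indicator Ed w" for w
    proof (cases "w \<in> W")
      case False
      then have "{j. w \<in> As t j} = {}" using As_sub by (auto simp: Dj_def)
      moreover have "w \<notin> Ed" using False by (auto simp: Ed_def E0_def)
      ultimately show ?thesis using False by (simp add: cW_def)
    next
      case w: True
      have "{j. w \<in> As t j} = {j \<in> {1..N w}. g j w < xt} \<union> {j \<in> {1..N w}. g j w = xt \<and> \<bar>w - ul xt\<bar> \<le> d}"
        using char[OF w] w by (auto simp: As_def Dset_def)
      moreover have "card ({j \<in> {1..N w}. g j w < xt} \<union> {j \<in> {1..N w}. g j w = xt \<and> \<bar>w - ul xt\<bar> \<le> d}) =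
          card {j \<in> {1..N w}. g j w < xt} + card {j \<in> {1..N w}. g j w = xt \<and> \<bar>w - ul xt\<bar> \<le> d}"
        by (rule card_Un_disjoint) auto
      moreover have "card {j \<in> {1..N w}. g j w = xt \<and> \<bar>w - ul xt\<bar> \<le> d} = (if w \<in> Ed then 1 else 0)"
      proof (cases "w \<in> Ed")
        case True
        then obtain j0 where j0: "1 \<le> j0" "j0 \<le> N w" "g j0 w = xt" by (auto simp: Ed_def E0_def)
        have "\<bar>w - ul xt\<bar> \<le> d" using True by (auto simp: Ed_def)
        then have "{j \<in> {1..N w}. g j w = xt \<and> \<bar>w - ul xt\<bar> \<le> d} = {j0}"
          using g_eq_iff[OF w _ _ j0(1,2)] j0 by auto
        then show ?thesis using True by simp
      next
        case False
        then have "{j \<in> {1..N w}. g j w = xt \<and> \<bar>w - ul xt\<bar> \<le> d} = {}"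
          using w by (auto simp: Ed_def E0_def abs_le_iff)
        then show ?thesis using False by simp
      qed
      ultimately show ?thesis using w by (simp add: cW_def k_def indicator_def)
    qed
    have "(\<Sum>j. emeasure lebesgue (As t j)) = (\<integral>\<^sup>+ w. cW xt w + indicator Ed w \<partial>lebesgue)"
      using base pt by simp
    also have "\<dots> = IC xt + emeasure lebesgue Ed"
      by (subst nn_integral_add) (auto simp: IC_def cW_borel Ed_sets intro!: borel_measurable_indicator)
    also have "\<dots> = ennreal (V xt) + ennreal d" unfolding IC_V Ed_def using Ed_measure[OF d0 dJ] by simp
    also have "\<dots> = ennreal t" using d0 V_nonneg by (simp add: d_def ennreal_plus[symmetric] del: ennreal_plus)
    also have "\<dots> = emeasure lebesgue ({..t} \<inter> {0<..TVr})"
    proof -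
      have "{..t} \<inter> {0<..TVr} = {0<..t}" using 3 by auto
      then show ?thesis using 3 by simp
    qed
    finally show ?thesis .
  qed
qed

end


lemma borel_set_induct_atMost[consumes 1, case_names empty atMost compl union]:
  assumes "A \<in> sets borel"
  assumes empty: "P {}" and am: "\<And>a. P {..a}" and cmp: "\<And>A. A \<in> sets borel \<Longrightarrow> P A \<Longrightarrow> P (-A)" and
          un: "\<And>f. disjoint_family f \<Longrightarrow> (\<And>i. f i \<in> sets borel) \<Longrightarrow>  (\<And>i. P (f i)) \<Longrightarrow> P (\<Union>i::nat. f i)"
  shows "P (A::real set)"
proof -
  let ?G = "range (\<lambda>a. {..a::real})"
  have "Int_stable ?G" unfolding Int_stable_def
  proof (intro ballI)
    fix X Y assume "X \<in> ?G" "Y \<in> ?G"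
    then obtain a b where "X = {..a}" "Y = {..b}" by auto
    then have "X \<inter> Y = {..min a b}" by auto
    then show "X \<inter> Y \<in> ?G" by auto
  qed
  moreover have "?G \<subseteq> Pow UNIV" by auto
  moreover have "A \<in> sigma_sets UNIV ?G" using assms(1) by (simp add: borel_eq_atMost)
  ultimately show ?thesis
  proof (induction rule: sigma_sets_induct_disjoint)
    case (union f)
      from union.hyps(2) have "\<And>i. f i \<in> sets borel" by (auto simp: borel_eq_atMost)
      with union show ?case by (auto intro: un)
  next
    case (basic A)
    then show ?case using am by auto
  next
    case (compl A)
    then have A: "A \<in> sets borel" by (simp add: borel_eq_atMost)
    have "P (-A)" by (rule cmp[OF A]) (use \<open>P A\<close> in auto)
    then show ?case by (simp add: Compl_eq_Diff_UNIV)
  qed (rule empty)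
qed

lemma ennreal_suminf_swap: "(\<Sum>i. \<Sum>j. f i j :: ennreal) = (\<Sum>j. \<Sum>i. f i j)"
proof -
  have "(\<Sum>i. \<Sum>j. f i j) = (\<integral>\<^sup>+i. \<integral>\<^sup>+j. f i j \<partial>count_space UNIV \<partial>count_space UNIV)"
    by (simp add: nn_integral_count_space_nat)
  also have "\<dots> = (\<integral>\<^sup>+j. \<integral>\<^sup>+i. f i j \<partial>count_space UNIV \<partial>count_space UNIV)"
    by (rule nn_integral_count_space_nn_integral) auto
  also have "\<dots> = (\<Sum>j. \<Sum>i. f i j)"
    by (simp add: nn_integral_count_space_nat)
  finally show ?thesis .
qed

context setting begin

definition Bs where "Bs B j = {w. (j, w) \<in> Dset W N \<and> sfun u \<gamma> j w \<in> B}"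

lemma Bs_sets: "B \<in> sets borel \<Longrightarrow> Bs B j \<in> sets lebesgue"
  unfolding Bs_def by (rule slice_sets)

lemma Bs_UNIV: "Bs UNIV j = As TVr j"
proof -
  have "sfun u \<gamma> j w \<le> TVr" if "(j, w) \<in> Dset W N" for w
  proof -
    have w: "w \<in> W" "1 \<le> j" "j \<le> N w" using that by (auto simp: Dset_def)
    show ?thesis using sf_bounds(2)[OF w] P_le_TV[of "g j w"] by linarith
  qed
  then show ?thesis by (auto simp: Bs_def As_def)
qed

lemma Phi_all: assumes B: "B \<in> sets borel"
  shows "(\<Sum>j. emeasure lebesgue (Bs B j)) = emeasure lebesgue (B \<inter> {0<..TVr})"
  using B
proof (induction rule: borel_set_induct_atMost)
  case empty then show ?case by (simp add: Bs_def)
next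
  case (atMost a)
  have "Bs {..a} = As a" by (auto simp: Bs_def As_def fun_eq_iff)
  then show ?case using Fm_eq[of a] by simp
next
  case (compl A)
  let ?J = "{0<..TVr::real}"
  have U: "(\<Sum>j. emeasure lebesgue (Bs UNIV j)) = emeasure lebesgue ?J"
  proof -
    have "{..TVr} \<inter> ?J = ?J" by auto
    then show ?thesis using Fm_eq[of TVr] by (simp add: Bs_UNIV)
  qed
  have split: "emeasure lebesgue (Bs (-A) j) + emeasure lebesgue (Bs A j) = emeasure lebesgue (Bs UNIV j)" for j
  proof -
    have "Bs (-A) j \<union> Bs A j = Bs UNIV j" "Bs (-A) j \<inter> Bs A j = {}" by (auto simp: Bs_def)
    moreover have "-A \<in> sets borel" using compl(1) by simp
    ultimately show ?thesis using plus_emeasure[OF Bs_sets[of "-A" j] Bs_sets[of A j]] compl(1) by simp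
  qed
  have "(\<Sum>j. emeasure lebesgue (Bs (-A) j)) + (\<Sum>j. emeasure lebesgue (Bs A j)) = (\<Sum>j. emeasure lebesgue (Bs UNIV j))"
    by (subst suminf_add) (auto simp: split)
  also have "\<dots> = emeasure lebesgue (-A \<inter> ?J) + emeasure lebesgue (A \<inter> ?J)"
  proof -
    have "(-A \<inter> ?J) \<union> (A \<inter> ?J) = ?J" "(-A \<inter> ?J) \<inter> (A \<inter> ?J) = {}" by auto
    moreover have "-A \<inter> ?J \<in> sets lebesgue" "A \<inter> ?J \<in> sets lebesgue" using compl(1) by auto
    ultimately show ?thesis using U plus_emeasure[of "-A \<inter> ?J" lebesgue "A \<inter> ?J"] by simp
  qed
  finally have eq: "(\<Sum>j. emeasure lebesgue (Bs (-A) j)) + emeasure lebesgue (A \<inter> ?J) = emeasure lebesgue (-A \<inter> ?J) + emeasure lebesgue (A \<inter> ?J)"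
    using compl(2) by simp
  have fin: "emeasure lebesgue (A \<inter> ?J) \<noteq> \<infinity>"
  proof -
    have "emeasure lebesgue (A \<inter> ?J) \<le> emeasure lebesgue ?J" by (intro emeasure_mono) auto
    also have "\<dots> < \<infinity>" using TVr_nonneg by simp
    finally show ?thesis by simp
  qed
  show ?case using eq fin ennreal_add_left_cancel[of "emeasure lebesgue (A \<inter> ?J)"] by (simp add: add.commute)
next
  case (union f)
  have "(\<Sum>j. emeasure lebesgue (Bs (\<Union>i. f i) j)) = (\<Sum>j. \<Sum>i. emeasure lebesgue (Bs (f i) j))"
  proof (intro suminf_cong)
    fix j
    have eq: "Bs (\<Union>i. f i) j = (\<Union>i. Bs (f i) j)" by (auto simp: Bs_def)
    have disj: "disjoint_family (\<lambda>i. Bs (f i) j)"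
      using union(1) by (auto simp: disjoint_family_on_def Bs_def)
    have r: "range (\<lambda>i. Bs (f i) j) \<subseteq> sets lebesgue" using Bs_sets union(2) by auto
    have "emeasure lebesgue (Bs (\<Union>i. f i) j) = emeasure lebesgue (\<Union>i. Bs (f i) j)" by (simp only: eq)
    also have "\<dots> = (\<Sum>i. emeasure lebesgue (Bs (f i) j))" by (rule suminf_emeasure[symmetric, OF r disj])
    finally show "emeasure lebesgue (Bs (\<Union>i. f i) j) = (\<Sum>i. emeasure lebesgue (Bs (f i) j))" .
  qed
  also have "\<dots> = (\<Sum>i. \<Sum>j. emeasure lebesgue (Bs (f i) j))" by (rule ennreal_suminf_swap)
  also have "\<dots> = (\<Sum>i. emeasure lebesgue (f i \<inter> {0<..TVr}))" using union(3) by simp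
  also have "\<dots> = emeasure lebesgue ((\<Union>i. f i) \<inter> {0<..TVr})"
  proof -
    have "disjoint_family (\<lambda>i. f i \<inter> {0<..TVr})" using union(1) by (auto simp: disjoint_family_on_def)
    moreover have "(\<Union>i. f i) \<inter> {0<..TVr} = (\<Union>i. f i \<inter> {0<..TVr})" by auto
    moreover have "range (\<lambda>i. f i \<inter> {0<..TVr}) \<subseteq> sets lebesgue" using union(2) by auto
    ultimately show ?thesis using suminf_emeasure[of "\<lambda>i. f i \<inter> {0<..TVr}" lebesgue] by (simp only:)
  qed
  finally show ?case .
qed

end


lemma countable_leb_zero: "countable (A::real set) \<Longrightarrow> emeasure lebesgue A = 0"
proof -
  assume c: "countable A"
  then have "A \<in> null_sets lborel" by (rule countable_imp_null_set_lborel)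
  then have "A \<in> sets lborel" "emeasure lborel A = 0" by auto
  then show ?thesis by simp
qed

context setting begin

lemma level_sets: "{x. u x = w} \<in> sets borel"
proof -
  have "{x \<in> space borel. u x = w} \<in> sets borel" using u_borel by measurable
  then show ?thesis by simp
qed

lemma countable_levels: "countable {w. emeasure lebesgue {x. u x = w} \<noteq> 0}"
proof -
  define a where "a = -R - 1"
  define b where "b = R + 1"
  define M' where "M' = restrict_space lborel {a..b}"
  have fM': "finite_measure M'"
  proof -
    have "a \<le> b" using Rpos by (simp add: a_def b_def)
    then show ?thesis
      unfolding M'_def by (intro finite_measureI) (simp add: emeasure_restrict_space space_restrict_space)
  qed
  have um: "u \<in> measurable M' borel"
    unfolding M'_def by (rule measurable_restrict_space1) (simp add: u_borel)
  interpret F: finite_measure "distr M' borel u"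
    by (rule finite_measure.finite_measure_distr[OF fM' um])
  have meas: "measure (distr M' borel u) {w} = measure lborel ({x. u x = w} \<inter> {a..b})" for w
  proof -
    have "measure (distr M' borel u) {w} = measure M' (u -` {w} \<inter> space M')"
      by (rule measure_distr[OF um]) simp
    also have "u -` {w} \<inter> space M' = {x. u x = w} \<inter> {a..b}" by (auto simp: M'_def space_restrict_space)
    also have "measure M' ({x. u x = w} \<inter> {a..b}) = measure lborel ({x. u x = w} \<inter> {a..b})"
      unfolding M'_def by (rule measure_restrict_space) auto
    finally show ?thesis .
  qed
  have "{w. emeasure lebesgue {x. u x = w} \<noteq> 0} \<subseteq> {w. measure (distr M' borel u) {w} \<noteq> 0}"
  proof
    fix w assume w: "w \<in> {w. emeasure lebesgue {x. u x = w} \<noteq> 0}"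
    have Lm: "{x. u x = w} \<inter> {a..b} \<in> sets lborel" using level_sets by auto
    have fin: "emeasure lborel ({x. u x = w} \<inter> {a..b}) < \<infinity>"
    proof -
      have "emeasure lborel ({x. u x = w} \<inter> {a..b}) \<le> emeasure lborel {a..b}" by (intro emeasure_mono) auto
      also have "\<dots> < \<infinity>" using Rpos by (simp add: a_def b_def)
      finally show ?thesis .
    qed
    have pos: "emeasure lborel ({x. u x = w} \<inter> {a..b}) \<noteq> 0"
    proof (cases "w = 0")
      case True
      have "{R<..b} \<subseteq> {x. u x = w} \<inter> {a..b}" using True Rsupp Rpos by (auto simp: a_def b_def)
      then have "emeasure lborel {R<..b} \<le> emeasure lborel ({x. u x = w} \<inter> {a..b})"
        by (intro emeasure_mono Lm)
      moreover have "emeasure lborel {R<..b} = 1" by (simp add: b_def)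
      ultimately show ?thesis by auto
    next
      case False
      have "{x. u x = w} \<subseteq> {a..b}"
      proof
        fix x assume "x \<in> {x. u x = w}"
        then have "\<not> R < \<bar>x\<bar>" using Rsupp False by force
        then show "x \<in> {a..b}" by (auto simp: a_def b_def abs_if split: if_splits)
      qed
      then have "{x. u x = w} \<inter> {a..b} = {x. u x = w}" by blast
      then show ?thesis using w level_sets by simp
    qed
    have "measure lborel ({x. u x = w} \<inter> {a..b}) \<noteq> 0"
      using pos fin by (simp add: measure_def enn2real_eq_0_iff)
    then show "w \<in> {w. measure (distr M' borel u) {w} \<noteq> 0}" by (simp add: meas)
  qed
  moreover have "countable {w. measure (distr M' borel u) {w} \<noteq> 0}" by (rule F.countable_support)
  ultimately show ?thesis by (rule countable_subset)
qed

lemma inj_core: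
  assumes d1: "(j, w) \<in> Dset W N" and d2: "(j', w') \<in> Dset W N"
    and eq: "sfun u \<gamma> j w = sfun u \<gamma> j' w'" and lt: "g j w < g j' w'"
  shows "emeasure lebesgue {x. u x = w} \<noteq> 0"
proof -
  have w1: "w \<in> W" "1 \<le> j" "j \<le> N w" using d1 by (auto simp: Dset_def)
  have w2: "w' \<in> W" "1 \<le> j'" "j' \<le> N w'" using d2 by (auto simp: Dset_def)
  let ?x = "g j w" and ?x' = "g j' w'"
  have s1: "sfun u \<gamma> j w \<le> P ?x" by (rule sf_bounds(2)[OF w1])
  have s2: "V ?x' \<le> sfun u \<gamma> j' w'" by (rule sf_bounds(1)[OF w2])
  have PV: "P ?x \<le> V ?x'" using lt by (rule P_le_V)
  have const: "u y = u ?x" if "?x \<le> y" "y < ?x'" for y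
  proof (cases "y = ?x")
    case True then show ?thesis by simp
  next
    case False
    then have "?x < y" using that by simp
    then have "P ?x + \<bar>u y - u ?x\<bar> \<le> P y" by (rule P_inc)
    moreover have "P y \<le> V ?x'" using that(2) by (rule P_le_V)
    ultimately show ?thesis using s1 s2 eq by linarith
  qed
  have "sfun u \<gamma> j w = P ?x" using s1 s2 PV eq by linarith
  then have "V ?x + \<bar>w - ul ?x\<bar> \<ge> V ?x + \<bar>u ?x - ul ?x\<bar>" using P_jump[of ?x] by (simp add: sfun_eq)
  then have "w = u ?x" using between[OF w1] by linarith
  then have sub: "{?x..<?x'} \<subseteq> {x. u x = w}" using const by auto
  have "emeasure lebesgue {?x..<?x'} \<le> emeasure lebesgue {x. u x = w}"
    using level_sets by (intro emeasure_mono[OF sub]) auto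
  moreover have "emeasure lebesgue {?x..<?x'} = ennreal (?x' - ?x)" using lt by simp
  moreover have "ennreal (?x' - ?x) > 0" using lt by simp
  ultimately show ?thesis by auto
qed

lemma inj_main: "inj_on (\<lambda>(j, w). sfun u \<gamma> j w) (Dset W N - {(j, w). emeasure lebesgue {x. u x = w} \<noteq> 0})"
proof (rule inj_onI)
  fix p q
  assume p: "p \<in> Dset W N - {(j, w). emeasure lebesgue {x. u x = w} \<noteq> 0}"
    and q: "q \<in> Dset W N - {(j, w). emeasure lebesgue {x. u x = w} \<noteq> 0}"
    and pq: "(\<lambda>(j, w). sfun u \<gamma> j w) p = (\<lambda>(j, w). sfun u \<gamma> j w) q"
  obtain j w where pj: "p = (j, w)" by (cases p)
  obtain j' w' where qj: "q = (j', w')" by (cases q)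
  have d1: "(j, w) \<in> Dset W N" and n1: "emeasure lebesgue {x. u x = w} = 0" using p pj by auto
  have d2: "(j', w') \<in> Dset W N" and n2: "emeasure lebesgue {x. u x = w'} = 0" using q qj by auto
  have eq: "sfun u \<gamma> j w = sfun u \<gamma> j' w'" using pq pj qj by simp
  show "p = q" unfolding pj qj
  proof -
  have w1: "w \<in> W" "1 \<le> j" "j \<le> N w" using d1 by (auto simp: Dset_def)
  have w2: "w' \<in> W" "1 \<le> j'" "j' \<le> N w'" using d2 by (auto simp: Dset_def)
  consider "g j w < g j' w'" | "g j' w' < g j w" | "g j w = g j' w'" by linarith
  then show "(j, w) = (j', w')"
  proof cases
    case 1 then show ?thesis using inj_core[OF d1 d2 eq] n1 by simp
  next
    case 2 then show ?thesis using inj_core[OF d2 d1 eq[symmetric]] n2 by simp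
  next
    case 3
    have "\<bar>w - ul (g j w)\<bar> = \<bar>w' - ul (g j w)\<bar>" using eq 3 by (simp add: sfun_eq)
    then have "w = w'" using between[OF w1] between[OF w2] 3 by (smt (verit))
    then show ?thesis using 3 g_eq_iff[OF w1 w2(2) w2(3)[folded \<open>w = w'\<close>]] by simp
  qed
  qed
qed

end


theorem proposition4p5:
  fixes u0 :: "real \<Rightarrow> real" and M :: real and W :: "real set"
    and N :: "real \<Rightarrow> nat" and \<gamma> :: "nat \<Rightarrow> real \<Rightarrow> real \<Rightarrow> real"
  assumes rcont: "\<forall>x. continuous (at_right x) u0"
    and bv: "pvar u0 UNIV < \<infinity>"
    and supp: "bounded {x. u0 x \<noteq> 0}"
    and range: "\<forall>x. 0 \<le> u0 x \<and> u0 x \<le> M"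
    and W_sub: "W \<subseteq> {0..M}"
    and W_full: "{0..M} - W \<in> null_sets lebesgue"
    and fin: "\<forall>w\<in>W. finite (frontier {x. u0 x > w})"
    and N_card: "\<forall>w\<in>W. N w = card (frontier {x. u0 x > w})"
    and pts: "\<forall>w\<in>W. {\<gamma> j w 0 | j. 1 \<le> j \<and> j \<le> N w} = frontier {x. u0 x > w}"
    and ordered: "\<forall>w\<in>W. \<forall>j k. 1 \<le> j \<and> j < k \<and> k \<le> N w \<longrightarrow> \<gamma> j w 0 < \<gamma> k w 0"
    and up: "\<forall>w\<in>W. \<forall>j. 1 \<le> j \<and> j \<le> N w \<and> odd j \<longrightarrow> crosses_up u0 w (\<gamma> j w 0)"
    and down: "\<forall>w\<in>W. \<forall>j. 1 \<le> j \<and> j \<le> N w \<and> even j \<longrightarrow> crosses_down u0 w (\<gamma> j w 0)"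
  shows "countable {w. emeasure lebesgue {x. u0 x = w} \<noteq> 0}
    \<and> muD W N {(j, w). emeasure lebesgue {x. u0 x = w} \<noteq> 0} = 0
    \<and> inj_on (\<lambda>(j, w). sfun u0 \<gamma> j w)
        (Dset W N - {(j, w). emeasure lebesgue {x. u0 x = w} \<noteq> 0})
    \<and> (\<forall>B \<in> sets borel.
        (\<forall>j. {w. (j, w) \<in> Dset W N \<and> sfun u0 \<gamma> j w \<in> B} \<in> sets lebesgue)
        \<and> muD W N {(j, w). sfun u0 \<gamma> j w \<in> B} = emeasure lebesgue (B \<inter> {0<..TV u0}))"
proof -
  obtain R0 where R0: "\<forall>x\<in>{x. u0 x \<noteq> 0}. \<bar>x\<bar> \<le> R0" using supp bounded_real by blast
  define R where "R = max R0 0"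
  have Rsupp: "u0 x = 0" if "R < \<bar>x\<bar>" for x
    using R0 that by (force simp: R_def)
  interpret S: setting u0 M W N \<gamma> R
  proof
    show "0 \<le> R" by (simp add: R_def)
    show "\<And>x. R < \<bar>x\<bar> \<Longrightarrow> u0 x = 0" by (rule Rsupp)
  qed (use rcont bv range W_sub W_full fin N_card pts ordered up down in auto)
  have C: "countable {w. emeasure lebesgue {x. u0 x = w} \<noteq> 0}" by (rule S.countable_levels)
  have Z: "muD W N {(j, w). emeasure lebesgue {x. u0 x = w} \<noteq> 0} = 0"
  proof -
    have "emeasure lebesgue {w. (j, w) \<in> Dset W N \<and> (j, w) \<in> {(j, w). emeasure lebesgue {x. u0 x = w} \<noteq> 0}} = 0" for j
    proof (rule countable_leb_zero)
      show "countable {w. (j, w) \<in> Dset W N \<and> (j, w) \<in> {(j, w). emeasure lebesgue {x. u0 x = w} \<noteq> 0}}"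
        by (rule countable_subset[OF _ C]) auto
    qed
    then show ?thesis by (simp add: muD_def)
  qed
  have B: "\<forall>B \<in> sets borel.
        (\<forall>j. {w. (j, w) \<in> Dset W N \<and> sfun u0 \<gamma> j w \<in> B} \<in> sets lebesgue)
        \<and> muD W N {(j, w). sfun u0 \<gamma> j w \<in> B} = emeasure lebesgue (B \<inter> {0<..TV u0})"
  proof (intro ballI conjI allI)
    fix B :: "real set" and j assume B: "B \<in> sets borel"
    show "{w. (j, w) \<in> Dset W N \<and> sfun u0 \<gamma> j w \<in> B} \<in> sets lebesgue" by (rule S.slice_sets[OF B])
  next
    fix B :: "real set" assume B: "B \<in> sets borel"
    have "muD W N {(j, w). sfun u0 \<gamma> j w \<in> B} = (\<Sum>j. emeasure lebesgue (S.Bs B j))"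
      by (simp add: muD_def S.Bs_def)
    also have "\<dots> = emeasure lebesgue (B \<inter> {0<..S.TVr})" by (rule S.Phi_all[OF B])
    also have "S.TVr = TV u0" by (simp add: S.TVr_def TV_def)
    finally show "muD W N {(j, w). sfun u0 \<gamma> j w \<in> B} = emeasure lebesgue (B \<inter> {0<..TV u0})" .
  qed
  show ?thesis using C Z S.inj_main B by blast
qed


end
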